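(* Let $\rho$ be a density operator and $\sigma$ a non-negative operator on a finite-dimensional Hilbert space, and let $1\ge\epsilon>\epsilon'\ge0$. Then $$D_H^\epsilon(\rho\|\sigma)\le D_{\max}^{\epsilon'}(\rho\|\sigma)+\log_2\frac{\epsilon}{\epsilon-\epsilon'}.$$
   Context: The fidelity is $F(\rho,\sigma)=\|\sqrt\rho\sqrt\sigma\|_1$. For non-negative $\rho,\sigma$ and $\epsilon\in(0,\mathrm{tr}(\rho)]$, the generalised relative entropy is defined by $2^{-D_H^\epsilon(\rho\|\sigma)}=\inf\{\mathrm{tr}(Q\sigma)/\epsilon:\ 0\le Q\le\mathrm{id},\ \mathrm{tr}(Q\rho)\ge\epsilon\}$. For a density operator $\rho$ and $\epsilon\ge0$, the $\epsilon$-smooth max-relative entropy is defined by $2^{-D_{\max}^\epsilon(\rho\|\sigma)}=\sup\{\mu:\ \mu\bar\rho\le\sigma,\ 1-F(\bar\rho,\rho)^2\le\epsilon^2\}$, the supremum over non-negative operators $\bar\rho$ with $\mathrm{tr}(\bar\rho)\le1$ and reals $\mu$. In both cases the relative entropy is $\infty$ when the right-hand side is $0$. *)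

theory Defs
  imports Complex_Main "Jordan_Normal_Form.Schur_Decomposition" "HOL-Library.Extended_Real"
begin

text \<open>Operators on the finite-dimensional Hilbert space C^n are represented as
  complex n x n matrices (Jordan_Normal_Form).\<close>

definition cmat_trace :: "complex mat \<Rightarrow> complex" where
  "cmat_trace A = (\<Sum>i<dim_row A. A $$ (i, i))"

definition nonneg_op :: "complex mat \<Rightarrow> bool" where
  "nonneg_op A \<longleftrightarrow> A \<in> carrier_mat (dim_row A) (dim_row A) \<and> mat_adjoint A = A \<and>
     (\<forall>v \<in> carrier_vec (dim_row A). Re ((A *\<^sub>v v) \<bullet>c v) \<ge> 0)"

definition op_le :: "complex mat \<Rightarrow> complex mat \<Rightarrow> bool" where
  "op_le A B \<longleftrightarrow> dim_row A = dim_row B \<and> dim_col A = dim_col B \<and> nonneg_op (B - A)"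

definition density_op :: "complex mat \<Rightarrow> bool" where
  "density_op \<rho> \<longleftrightarrow> nonneg_op \<rho> \<and> cmat_trace \<rho> = 1"

definition op_sqrt :: "complex mat \<Rightarrow> complex mat" where
  "op_sqrt A = (THE B. nonneg_op B \<and> dim_row B = dim_row A \<and> B * B = A)"

definition trace_norm :: "complex mat \<Rightarrow> real" where
  "trace_norm X = Re (cmat_trace (op_sqrt (mat_adjoint X * X)))"

definition fidelity :: "complex mat \<Rightarrow> complex mat \<Rightarrow> real" where
  "fidelity \<rho> \<sigma> = trace_norm (op_sqrt \<rho> * op_sqrt \<sigma>)"

definition hyp_test_val :: "real \<Rightarrow> complex mat \<Rightarrow> complex mat \<Rightarrow> real" where
  "hyp_test_val \<epsilon> \<rho> \<sigma> = Inf {Re (cmat_trace (Q * \<sigma>)) / \<epsilon> | Q.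
      Q \<in> carrier_mat (dim_row \<rho>) (dim_row \<rho>) \<and> nonneg_op Q \<and>
      op_le Q (1\<^sub>m (dim_row \<rho>)) \<and> Re (cmat_trace (Q * \<rho>)) \<ge> \<epsilon>}"

definition D_H :: "real \<Rightarrow> complex mat \<Rightarrow> complex mat \<Rightarrow> ereal" where
  "D_H \<epsilon> \<rho> \<sigma> = (if hyp_test_val \<epsilon> \<rho> \<sigma> = 0 then \<infinity>
                   else ereal (- log 2 (hyp_test_val \<epsilon> \<rho> \<sigma>)))"

definition max_val :: "real \<Rightarrow> complex mat \<Rightarrow> complex mat \<Rightarrow> ereal" where
  "max_val \<epsilon> \<rho> \<sigma> = Sup {ereal \<mu> | \<mu> \<rho>'.
      \<rho>' \<in> carrier_mat (dim_row \<rho>) (dim_row \<rho>) \<and> nonneg_op \<rho>' \<and>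
      Re (cmat_trace \<rho>') \<le> 1 \<and>
      op_le (complex_of_real \<mu> \<cdot>\<^sub>m \<rho>') \<sigma> \<and>
      1 - (fidelity \<rho>' \<rho>)\<^sup>2 \<le> \<epsilon>\<^sup>2}"

definition D_max :: "real \<Rightarrow> complex mat \<Rightarrow> complex mat \<Rightarrow> ereal" where
  "D_max \<epsilon> \<rho> \<sigma> = (if max_val \<epsilon> \<rho> \<sigma> = 0 then \<infinity>
                     else if max_val \<epsilon> \<rho> \<sigma> = \<infinity> then -\<infinity>
                     else ereal (- log 2 (real_of_ereal (max_val \<epsilon> \<rho> \<sigma>))))"

end

theory Submission
  imports Defs
begin


lemma adj_dims[simp]: "dim_row (mat_adjoint A) = dim_col A" "dim_col (mat_adjoint A) = dim_row A"
  unfolding mat_adjoint_def by (simp_all add: mat_of_rows_def)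

lemma adj_carrier[simp,intro]: "A \<in> carrier_mat n m \<Longrightarrow> mat_adjoint A \<in> carrier_mat m n"
  by (rule carrier_matI, simp_all)

lemma adj_index[simp]: "i < dim_col A \<Longrightarrow> j < dim_row A \<Longrightarrow> mat_adjoint A $$ (i,j) = cnj (A $$ (j,i))"
  unfolding mat_adjoint_def by (simp add: mat_of_rows_index)

lemma adj_adj[simp]: "mat_adjoint (mat_adjoint (A::complex mat)) = A"
  by (rule eq_matI, simp_all)

lemma adj_mult: assumes "A \<in> carrier_mat n m" "B \<in> carrier_mat m k"
  shows "mat_adjoint ((A::complex mat) * B) = mat_adjoint B * mat_adjoint A"
proof (rule eq_matI)
  fix i j assume ij: "i < dim_row (mat_adjoint B * mat_adjoint A)" "j < dim_col (mat_adjoint B * mat_adjoint A)"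
  thus "mat_adjoint (A * B) $$ (i, j) = (mat_adjoint B * mat_adjoint A) $$ (i, j)"
    using assms by (auto simp: scalar_prod_def intro!: sum.cong)
qed (use assms in auto)

lemma adj_add: assumes "A \<in> carrier_mat n m" "B \<in> carrier_mat n m"
  shows "mat_adjoint ((A::complex mat) + B) = mat_adjoint A + mat_adjoint B"
  by (rule eq_matI, insert assms, auto)

lemma adj_minus: assumes "A \<in> carrier_mat n m" "B \<in> carrier_mat n m"
  shows "mat_adjoint ((A::complex mat) - B) = mat_adjoint A - mat_adjoint B"
  by (rule eq_matI, insert assms, auto)

lemma adj_smult: "mat_adjoint (c \<cdot>\<^sub>m (A::complex mat)) = cnj c \<cdot>\<^sub>m mat_adjoint A"
  by (rule eq_matI, auto)

lemma adj_one[simp]: "mat_adjoint (1\<^sub>m n :: complex mat) = 1\<^sub>m n"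
  by (rule eq_matI, auto)

lemma adj_zero[simp]: "mat_adjoint (0\<^sub>m n m :: complex mat) = 0\<^sub>m m n"
  by (rule eq_matI, auto)

lemma trace_comm: assumes "A \<in> carrier_mat n m" "B \<in> carrier_mat m n"
  shows "cmat_trace ((A::complex mat) * B) = cmat_trace (B * A)"
proof -
  have "cmat_trace (A * B) = (\<Sum>i<n. \<Sum>j<m. A $$ (i,j) * B $$ (j,i))"
    using assms by (auto simp: cmat_trace_def scalar_prod_def atLeast0LessThan intro!: sum.cong)
  also have "\<dots> = (\<Sum>j<m. \<Sum>i<n. B $$ (j,i) * A $$ (i,j))"
    by (subst sum.swap, simp add: mult.commute)
  also have "\<dots> = cmat_trace (B * A)"
    using assms by (auto simp: cmat_trace_def scalar_prod_def atLeast0LessThan intro!: sum.cong)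
  finally show ?thesis .
qed

lemma trace_add: assumes "A \<in> carrier_mat n n" "B \<in> carrier_mat n n"
  shows "cmat_trace ((A::complex mat) + B) = cmat_trace A + cmat_trace B"
  using assms by (auto simp: cmat_trace_def sum.distrib)

lemma trace_minus: assumes "A \<in> carrier_mat n n" "B \<in> carrier_mat n n"
  shows "cmat_trace ((A::complex mat) - B) = cmat_trace A - cmat_trace B"
  using assms by (auto simp: cmat_trace_def sum_subtractf)

lemma trace_smult: assumes "A \<in> carrier_mat n n" shows "cmat_trace (c \<cdot>\<^sub>m (A::complex mat)) = c * cmat_trace A"
  using assms by (auto simp: cmat_trace_def sum_distrib_left)

lemma trace_adj: assumes "A \<in> carrier_mat n n"
  shows "cmat_trace (mat_adjoint (A::complex mat)) = cnj (cmat_trace A)"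
  using assms by (auto simp: cmat_trace_def)

lemma trace_one[simp]: "cmat_trace (1\<^sub>m n :: complex mat) = of_nat n"
  by (auto simp: cmat_trace_def)

lemma trace_zero[simp]: "cmat_trace (0\<^sub>m n n :: complex mat) = 0"
  by (auto simp: cmat_trace_def)

definition dmat :: "nat \<Rightarrow> (nat \<Rightarrow> complex) \<Rightarrow> complex mat" where
  "dmat n d = mat n n (\<lambda>(i,j). if i = j then d i else 0)"

lemma dmat_carrier[simp,intro]: "dmat n d \<in> carrier_mat n n"
  by (auto simp: dmat_def)
lemma dmat_dims[simp]: "dim_row (dmat n d) = n" "dim_col (dmat n d) = n"
  by (auto simp: dmat_def)
lemma dmat_index[simp]: "i < n \<Longrightarrow> j < n \<Longrightarrow> dmat n d $$ (i,j) = (if i = j then d i else 0)"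
  by (auto simp: dmat_def)

lemma dmat_mult: "dmat n d * dmat n e = dmat n (\<lambda>i. d i * e i)"
proof (rule eq_matI)
  fix i j assume "i < dim_row (dmat n (\<lambda>i. d i * e i))" "j < dim_col (dmat n (\<lambda>i. d i * e i))"
  hence ij: "i < n" "j < n" by auto
  have "(dmat n d * dmat n e) $$ (i,j) = (\<Sum>k<n. dmat n d $$ (i,k) * dmat n e $$ (k,j))"
    using ij by (simp add: scalar_prod_def atLeast0LessThan)
  also have "\<dots> = (\<Sum>k<n. if k = i then d i * (if i = j then e i else 0) else 0)"
    by (rule sum.cong, insert ij, auto)
  also have "\<dots> = d i * (if i = j then e i else 0)"
    using ij by (simp add: sum.delta)
  also have "\<dots> = dmat n (\<lambda>i. d i * e i) $$ (i,j)" using ij by simp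
  finally show "(dmat n d * dmat n e) $$ (i,j) = dmat n (\<lambda>i. d i * e i) $$ (i,j)" .
qed (simp_all add: dmat_def)

lemma dmat_adj: "mat_adjoint (dmat n d) = dmat n (\<lambda>i. cnj (d i))"
  by (rule eq_matI, auto)

lemma dmat_add: "dmat n d + dmat n e = dmat n (\<lambda>i. d i + e i)"
  by (rule eq_matI, auto)

lemma dmat_one: "dmat n (\<lambda>_. 1) = 1\<^sub>m n"
  by (rule eq_matI, auto)

lemma dmat_zero: "dmat n (\<lambda>_. 0) = 0\<^sub>m n n"
  by (rule eq_matI, auto)

lemma dmat_smult: "c \<cdot>\<^sub>m dmat n d = dmat n (\<lambda>i. c * d i)"
  by (rule eq_matI, auto)

lemma trace_dmat: "cmat_trace (dmat n d) = (\<Sum>i<n. d i)"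
  by (auto simp: cmat_trace_def)

lemma dmat_cong: assumes "\<And>i. i < n \<Longrightarrow> d i = e i" shows "dmat n d = dmat n e"
  unfolding dmat_def by (rule cong_mat, insert assms, auto)

definition unitary :: "complex mat \<Rightarrow> nat \<Rightarrow> bool" where
  "unitary U n \<longleftrightarrow> U \<in> carrier_mat n n \<and> mat_adjoint U * U = 1\<^sub>m n \<and> U * mat_adjoint U = 1\<^sub>m n"

lemma unitary_adj: "unitary U n \<Longrightarrow> unitary (mat_adjoint U) n"
  unfolding unitary_def using adj_carrier[of U n n] by simp



lemma cscalar_smult_self: assumes "v \<in> carrier_vec n"
  shows "(k \<cdot>\<^sub>v v) \<bullet>c (k \<cdot>\<^sub>v v) = (k * cnj k) * (v \<bullet>c (v :: complex vec))"
proof -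
  have "(k \<cdot>\<^sub>v v) \<bullet>c (k \<cdot>\<^sub>v v) = (k \<cdot>\<^sub>v v) \<bullet> (cnj k \<cdot>\<^sub>v conjugate v)"
    by (simp add: conjugate_smult_vec)
  also have "\<dots> = k * (cnj k * (v \<bullet> conjugate v))"
    using assms by simp
  finally show ?thesis by simp
qed

lemma cscalar_self_real: assumes "v \<in> carrier_vec n"
  shows "v \<bullet>c (v :: complex vec) = of_real (Re (v \<bullet>c v)) \<and> Re (v \<bullet>c v) \<ge> 0"
proof -
  have "v \<bullet>c v \<ge> 0" by (rule conjugate_square_ge_0_vec)
  thus ?thesis by (auto simp: less_eq_complex_def complex_eq_iff)
qed

lemma unit_eigenvector: assumes A: "(A :: complex mat) \<in> carrier_mat (Suc m) (Suc m)"
  shows "\<exists>e u. u \<in> carrier_vec (Suc m) \<and> u \<bullet>c u = 1 \<and> A *\<^sub>v u = e \<cdot>\<^sub>v u"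
proof -
  from char_poly_factorized[OF A] obtain as where cp: "char_poly A = (\<Prod>a\<leftarrow>as. [:- a, 1:])"
    and len: "length as = Suc m" by auto
  then obtain a rest where as: "as = a # rest" by (cases as, auto)
  have "poly (char_poly A) a = 0" unfolding cp as by simp
  hence "eigenvalue A a" using eigenvalue_root_char_poly[OF A] by simp
  from find_eigenvector[OF A this] obtain v where "eigenvector A v a" by blast
  hence v: "v \<in> carrier_vec (Suc m)" "v \<noteq> 0\<^sub>v (Suc m)" "A *\<^sub>v v = a \<cdot>\<^sub>v v"
    unfolding eigenvector_def using A by auto
  define r where "r = Re (v \<bullet>c v)"
  from cscalar_self_real[OF v(1)] have vv: "v \<bullet>c v = of_real r" "r \<ge> 0" unfolding r_def by auto
  have "v \<bullet>c v \<noteq> 0" using v by simp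
  with vv have r0: "r > 0" by auto
  define k where "k = complex_of_real (1 / sqrt r)"
  define u where "u = k \<cdot>\<^sub>v v"
  have u: "u \<in> carrier_vec (Suc m)" unfolding u_def using v by simp
  have "u \<bullet>c u = (k * cnj k) * of_real r" unfolding u_def cscalar_smult_self[OF v(1)] vv ..
  also have "\<dots> = of_real ((1 / sqrt r) * (1 / sqrt r) * r)" unfolding k_def by (simp only: complex_cnj_complex_of_real of_real_mult)
  also have "(1 / sqrt r) * (1 / sqrt r) * r = 1" using r0
  proof -
    have "sqrt r * sqrt r = r" using r0 by simp
    moreover have "sqrt r > 0" using r0 by simp
    ultimately show ?thesis by (simp add: field_simps)
  qed
  finally have "u \<bullet>c u = 1" by simp
  hence uu: "u \<bullet>c u = 1" .
  have "A *\<^sub>v u = k \<cdot>\<^sub>v (A *\<^sub>v v)" unfolding u_def using A v by (intro mult_mat_vec[of _ "Suc m" "Suc m"])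
  also have "\<dots> = a \<cdot>\<^sub>v u" unfolding v(3) u_def by (simp add: smult_smult_assoc mult.commute)
  finally show ?thesis using u uu by blast
qed

lemma orthonormal_unitary: assumes us: "set us \<subseteq> carrier_vec n" "length us = n"
  and on: "\<And>i j. i < n \<Longrightarrow> j < n \<Longrightarrow> us ! i \<bullet>c us ! j = (if i = j then 1 else 0)"
  shows "unitary (mat_of_cols n us) n"
proof -
  define W where "W = mat_of_cols n us"
  have W: "W \<in> carrier_mat n n" unfolding W_def using us by auto
  have WW: "mat_adjoint W * W = 1\<^sub>m n"
  proof (rule eq_matI)
    fix i j assume ij: "i < dim_row (1\<^sub>m n :: complex mat)" "j < dim_col (1\<^sub>m n :: complex mat)"
    hence ij: "i < n" "j < n" by auto
    have ui: "us ! i \<in> carrier_vec n" "us ! j \<in> carrier_vec n" using us ij by auto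
    have "(mat_adjoint W * W) $$ (i,j) = (\<Sum>k<n. cnj (W $$ (k,i)) * W $$ (k,j))"
      using W ij by (simp add: scalar_prod_def atLeast0LessThan)
    also have "\<dots> = (\<Sum>k<n. us ! j $ k * cnj (us ! i $ k))"
      unfolding W_def using ij us by (intro sum.cong, auto simp: mat_of_cols_index)
    also have "\<dots> = us ! j \<bullet>c us ! i"
      using ui by (simp add: scalar_prod_def atLeast0LessThan)
    also have "\<dots> = 1\<^sub>m n $$ (i,j)" using on[OF ij(2) ij(1)] ij by auto
    finally show "(mat_adjoint W * W) $$ (i,j) = 1\<^sub>m n $$ (i,j)" .
  qed (use W in auto)
  have "W * mat_adjoint W = 1\<^sub>m n"
    by (rule mat_mult_left_right_inverse[OF _ W WW], use W in auto)
  with WW W show ?thesis unfolding unitary_def W_def by auto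
qed

lemma unitary_completion: assumes u: "u \<in> carrier_vec n" and uu: "u \<bullet>c u = (1::complex)"
  shows "\<exists>W. unitary W n \<and> col W 0 = u"
proof -
  have u0: "u \<noteq> 0\<^sub>v n" using uu u by auto
  hence n: "n \<noteq> 0" using u by auto
  interpret cof_vec_space n "TYPE(complex)" .
  define b where "b = basis_completion u"
  define ws where "ws = gram_schmidt n b"
  from basis_completion[OF u u0, folded b_def]
  have dist_b: "distinct b" 
    and indep: "\<not> lin_dep (set b)" and b: "set b \<subseteq> carrier_vec n" and hdb: "hd b = u" 
    and len_b: "length b = n" by auto
  from hdb len_b n obtain vs where bv: "b = u # vs" by (cases b, auto)
  from gram_schmidt_result[OF b dist_b indep refl, folded ws_def]
  have ws: "set ws \<subseteq> carrier_vec n" "corthogonal ws" "length ws = n" 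
    by (auto simp: len_b)
  from gram_schmidt_hd[OF u, of vs, folded bv] have hdws: "hd ws = u" unfolding ws_def .
  define nf where "nf = (\<lambda>w::complex vec. complex_of_real (1 / sqrt (Re (w \<bullet>c w))))"
  define us where "us = map (\<lambda>w. nf w \<cdot>\<^sub>v w) ws"
  have us: "set us \<subseteq> carrier_vec n" "length us = n" unfolding us_def using ws by auto
  have usi: "us ! i = nf (ws ! i) \<cdot>\<^sub>v ws ! i" if "i < n" for i
    unfolding us_def using ws that by auto
  have on: "us ! i \<bullet>c us ! j = (if i = j then 1 else 0)" if ij: "i < n" "j < n" for i j
  proof -
    have wi: "ws ! i \<in> carrier_vec n" "ws ! j \<in> carrier_vec n" using ws ij by auto
    show ?thesis
    proof (cases "i = j")
      case True
      define r where "r = Re (ws ! i \<bullet>c ws ! i)"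
      from cscalar_self_real[OF wi(1)] have vv: "ws ! i \<bullet>c ws ! i = of_real r" "r \<ge> 0"
        unfolding r_def by auto
      have "ws ! i \<bullet>c ws ! i \<noteq> 0" using corthogonalD[OF ws(2), of i i] ws ij by auto
      with vv have r0: "r > 0" by auto
      have "us ! i \<bullet>c us ! j = (nf (ws ! i) * cnj (nf (ws ! i))) * of_real r"
        unfolding True usi[OF ij(2)] cscalar_smult_self[OF wi(2)] using vv True by simp
      also have "\<dots> = of_real ((1 / sqrt r) * (1 / sqrt r) * r)" unfolding nf_def r_def
        by (simp only: complex_cnj_complex_of_real of_real_mult)
      also have "(1 / sqrt r) * (1 / sqrt r) * r = 1"
      proof -
        have "sqrt r * sqrt r = r" using r0 by simp
        moreover have "sqrt r > 0" using r0 by simp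
        ultimately show ?thesis by (simp add: field_simps)
      qed
      finally show ?thesis using True by simp
    next
      case False
      have "ws ! i \<bullet>c ws ! j = 0" using corthogonalD[OF ws(2), of i j] ws ij False by auto
      hence "us ! i \<bullet>c us ! j = nf (ws ! i) * (cnj (nf (ws ! j)) * (ws ! i \<bullet>c ws ! j))"
        unfolding usi[OF ij(1)] usi[OF ij(2)] using wi by (simp add: conjugate_smult_vec)
      thus ?thesis using \<open>ws ! i \<bullet>c ws ! j = 0\<close> False by simp
    qed
  qed
  have un: "unitary (mat_of_cols n us) n" by (rule orthonormal_unitary[OF us on])
  have ws0: "ws ! 0 = u" using hdws ws n by (cases ws, auto)
  have "u \<bullet>c u = of_real (Re (u \<bullet>c u))" using cscalar_self_real[OF u] by auto
  hence "Re (u \<bullet>c u) = 1" using uu by simp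
  hence nfu: "nf u = 1" unfolding nf_def by simp
  have "col (mat_of_cols n us) 0 = us ! 0" using us n by (intro col_mat_of_cols, auto)
  also have "\<dots> = u" using usi[of 0] n ws0 nfu u by simp
  finally show ?thesis using un by blast
qed

lemma unitary_cancel: assumes "unitary U n" "X \<in> carrier_mat n k"
  shows "mat_adjoint U * (U * X) = X" "U * (mat_adjoint U * X) = X"
proof -
  have U: "U \<in> carrier_mat n n" "mat_adjoint U * U = 1\<^sub>m n" "U * mat_adjoint U = 1\<^sub>m n"
    using assms unfolding unitary_def by auto
  have aU: "mat_adjoint U \<in> carrier_mat n n" using U by auto
  have "mat_adjoint U * (U * X) = (mat_adjoint U * U) * X"
    using assoc_mult_mat[OF aU U(1) assms(2)] by simp
  thus "mat_adjoint U * (U * X) = X" using U assms by simp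
  have "U * (mat_adjoint U * X) = (U * mat_adjoint U) * X"
    using assoc_mult_mat[OF U(1) aU assms(2)] by simp
  thus "U * (mat_adjoint U * X) = X" using U assms by simp
qed

lemma unitary_mult: assumes "unitary U n" "unitary V n" shows "unitary (U * V) n"
proof -
  have U: "U \<in> carrier_mat n n" "mat_adjoint U * U = 1\<^sub>m n" "U * mat_adjoint U = 1\<^sub>m n"
    and V: "V \<in> carrier_mat n n" "mat_adjoint V * V = 1\<^sub>m n" "V * mat_adjoint V = 1\<^sub>m n"
    using assms unfolding unitary_def by auto
  have aU: "mat_adjoint U \<in> carrier_mat n n" and aV: "mat_adjoint V \<in> carrier_mat n n" using U V by auto
  have adj: "mat_adjoint (U * V) = mat_adjoint V * mat_adjoint U" by (rule adj_mult[OF U(1) V(1)])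
  have "mat_adjoint V * mat_adjoint U * (U * V) = mat_adjoint V * (mat_adjoint U * (U * V))"
    using U V aU aV by (rule_tac assoc_mult_mat, auto)
  also have "\<dots> = 1\<^sub>m n" using unitary_cancel(1)[OF assms(1) V(1)] V by simp
  finally have 1: "mat_adjoint (U * V) * (U * V) = 1\<^sub>m n" unfolding adj .
  have "U * V * (mat_adjoint V * mat_adjoint U) = U * (V * (mat_adjoint V * mat_adjoint U))"
    using U V aU aV by (rule_tac assoc_mult_mat, auto)
  also have "\<dots> = 1\<^sub>m n" using unitary_cancel(2)[OF assms(2) aU] U by simp
  finally have 2: "U * V * mat_adjoint (U * V) = 1\<^sub>m n" unfolding adj .
  show ?thesis unfolding unitary_def using 1 2 U V by auto
qed

definition bdiag :: "nat \<Rightarrow> complex mat \<Rightarrow> complex mat" where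
  "bdiag m U = four_block_mat (1\<^sub>m 1) (0\<^sub>m 1 m) (0\<^sub>m m 1) U"

lemma adj_four_block: assumes "A \<in> carrier_mat n1 m1" "B \<in> carrier_mat n1 m2" "C \<in> carrier_mat n2 m1" "D \<in> carrier_mat n2 m2"
  shows "mat_adjoint (four_block_mat A B C D :: complex mat) = four_block_mat (mat_adjoint A) (mat_adjoint C) (mat_adjoint B) (mat_adjoint D)"
  by (rule eq_matI, insert assms, auto)

lemma bdiag_carrier[simp]: "U \<in> carrier_mat m m \<Longrightarrow> bdiag m U \<in> carrier_mat (Suc m) (Suc m)"
  unfolding bdiag_def using four_block_carrier_mat[of "1\<^sub>m 1 :: complex mat" 1 1 U m m] by auto

lemma adj_bdiag: "U \<in> carrier_mat m m \<Longrightarrow> mat_adjoint (bdiag m U) = bdiag m (mat_adjoint U)"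
  unfolding bdiag_def by (subst adj_four_block[of _ 1 1 _ m _ m], auto)

lemma bdiag_mult: assumes "U \<in> carrier_mat m m" "V \<in> carrier_mat m m"
  shows "bdiag m U * bdiag m V = bdiag m (U * V)"
  unfolding bdiag_def
  by (subst mult_four_block_mat[of _ 1 1 _ m _ m _ _ 1 _ m], insert assms, auto)

lemma unitary_bdiag: assumes "unitary U m" shows "unitary (bdiag m U) (Suc m)"
proof -
  have U: "U \<in> carrier_mat m m" "mat_adjoint U * U = 1\<^sub>m m" "U * mat_adjoint U = 1\<^sub>m m"
    using assms unfolding unitary_def by auto
  have one: "bdiag m (1\<^sub>m m) = 1\<^sub>m (Suc m)" unfolding bdiag_def
    using four_block_one_mat[of 1 m, where 'a=complex] by simp
  show ?thesis unfolding unitary_def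
    using U by (simp add: adj_bdiag bdiag_mult one)
qed

lemma dmat_Suc: "dmat (Suc m) d = four_block_mat (dmat 1 (\<lambda>_. d 0)) (0\<^sub>m 1 m) (0\<^sub>m m 1) (dmat m (\<lambda>i. d (Suc i)))"
  by (rule eq_matI, auto)

lemma bdiag_dmat: assumes "U \<in> carrier_mat m m"
  shows "bdiag m U * dmat (Suc m) d * mat_adjoint (bdiag m U) = 
    four_block_mat (dmat 1 (\<lambda>_. d 0)) (0\<^sub>m 1 m) (0\<^sub>m m 1) (U * dmat m (\<lambda>i. d (Suc i)) * mat_adjoint U)"
proof -
  have aU: "mat_adjoint U \<in> carrier_mat m m" using assms by auto
  have "bdiag m U * dmat (Suc m) d = four_block_mat (dmat 1 (\<lambda>_. d 0)) (0\<^sub>m 1 m) (0\<^sub>m m 1) (U * dmat m (\<lambda>i. d (Suc i)))"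
    unfolding bdiag_def dmat_Suc
    by (subst mult_four_block_mat[of _ 1 1 _ m _ m _ _ 1 _ m], insert assms, auto)
  moreover have "\<dots> * mat_adjoint (bdiag m U) = four_block_mat (dmat 1 (\<lambda>_. d 0)) (0\<^sub>m 1 m) (0\<^sub>m m 1) (U * dmat m (\<lambda>i. d (Suc i)) * mat_adjoint U)"
    apply (simp only: adj_bdiag[OF assms])
    unfolding bdiag_def
    by (subst mult_four_block_mat[of _ 1 1 _ m _ m _ _ 1 _ m], insert assms aU, auto)
  ultimately show ?thesis by simp
qed

lemma spectral: assumes "A \<in> carrier_mat n n" "mat_adjoint A = A"
  shows "\<exists>U d. unitary U n \<and> (\<forall>i<n. d i = of_real (Re (d i))) \<and> A = U * dmat n d * mat_adjoint U"
  using assms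
proof (induction n arbitrary: A)
  case 0
  have "A = 1\<^sub>m 0 * dmat 0 (\<lambda>_. 0) * mat_adjoint (1\<^sub>m 0)"
    using 0 by (intro eq_matI, auto)
  moreover have "unitary (1\<^sub>m 0) 0" unfolding unitary_def by simp
  ultimately show ?case by blast
next
  case (Suc m A)
  note A = Suc.prems(1) and herm = Suc.prems(2)
  obtain e u where u: "u \<in> carrier_vec (Suc m)" "u \<bullet>c u = 1" "A *\<^sub>v u = e \<cdot>\<^sub>v u"
    using unit_eigenvector[OF A] by blast
  obtain W where W: "unitary W (Suc m)" "col W 0 = u" using unitary_completion[OF u(1,2)] by blast
  have Wc: "W \<in> carrier_mat (Suc m) (Suc m)" using W unfolding unitary_def by auto
  have aW: "mat_adjoint W \<in> carrier_mat (Suc m) (Suc m)" using Wc by auto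
  define B where "B = mat_adjoint W * (A * W)"
  have Bc: "B \<in> carrier_mat (Suc m) (Suc m)" unfolding B_def using Wc aW A by auto
  have hB: "mat_adjoint B = B" unfolding B_def
    using adj_mult[OF aW, of "A * W" "Suc m"] adj_mult[OF A Wc] Wc A herm
    by (simp add: assoc_mult_mat[of _ "Suc m" "Suc m" _ "Suc m" _ "Suc m"])
  have Bcol: "B $$ (i,0) = (if i = 0 then e else 0)" if i: "i < Suc m" for i
  proof -
    have "B $$ (i,0) = row (mat_adjoint W) i \<bullet> col (A * W) 0"
      unfolding B_def using i Wc A by simp
    also have "col (A * W) 0 = A *\<^sub>v col W 0" by (rule col_mult2[OF A Wc], simp)
    also have "\<dots> = e \<cdot>\<^sub>v col W 0" using u W by simp
    also have "row (mat_adjoint W) i \<bullet> (e \<cdot>\<^sub>v col W 0) = e * (row (mat_adjoint W) i \<bullet> col W 0)"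
      using i Wc W(2) u(1) by (intro scalar_prod_smult_distrib[of _ "Suc m"], auto)
    also have "row (mat_adjoint W) i \<bullet> col W 0 = (mat_adjoint W * W) $$ (i,0)"
      using i Wc by simp
    also have "\<dots> = (if i = 0 then 1 else 0)" using W(1) i unfolding unitary_def by simp
    finally show ?thesis by simp
  qed
  have Brow: "B $$ (0,j) = cnj (B $$ (j,0))" if j: "j < Suc m" for j
  proof -
    have "B $$ (0,j) = mat_adjoint B $$ (0,j)" using hB by simp
    also have "\<dots> = cnj (B $$ (j,0))" using j Bc by simp
    finally show ?thesis .
  qed
  have ereal: "cnj e = e" using Brow[of 0] Bcol[of 0] by simp
  define B4 where "B4 = mat m m (\<lambda>(i,j). B $$ (Suc i, Suc j))"
  have B4c: "B4 \<in> carrier_mat m m" unfolding B4_def by simp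
  have B4d[simp]: "dim_row B4 = m" "dim_col B4 = m" unfolding B4_def by simp_all
  have hB4: "mat_adjoint B4 = B4"
  proof (rule eq_matI)
    fix i j assume ij: "i < dim_row B4" "j < dim_col B4"
    hence ij': "i < m" "j < m" unfolding B4_def by auto
    have "mat_adjoint B4 $$ (i,j) = cnj (B $$ (Suc j, Suc i))" using ij' unfolding B4_def by simp
    also have "\<dots> = mat_adjoint B $$ (Suc i, Suc j)" using ij' Bc by simp
    also have "\<dots> = B4 $$ (i,j)" using ij' hB unfolding B4_def by simp
    finally show "mat_adjoint B4 $$ (i,j) = B4 $$ (i,j)" .
  qed (auto simp: B4_def)
  obtain U' d' where IH: "unitary U' m" "\<forall>i<m. d' i = of_real (Re (d' i))" "B4 = U' * dmat m d' * mat_adjoint U'"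
    using Suc.IH[OF B4c hB4] by blast
  have U'c: "U' \<in> carrier_mat m m" using IH(1) unfolding unitary_def by auto
  define d where "d = (\<lambda>i. if i = 0 then e else d' (i - 1))"
  define F where "F = bdiag m U'"
  have Fc: "F \<in> carrier_mat (Suc m) (Suc m)" unfolding F_def using U'c by simp
  have "F * dmat (Suc m) d * mat_adjoint F = four_block_mat (dmat 1 (\<lambda>_. e)) (0\<^sub>m 1 m) (0\<^sub>m m 1) B4"
    unfolding F_def bdiag_dmat[OF U'c] IH(3) d_def by simp
  also have "\<dots> = B"
  proof (rule eq_matI)
    fix i j assume ij: "i < dim_row B" "j < dim_col B"
    hence ij': "i < Suc m" "j < Suc m" using Bc by auto
    show "four_block_mat (dmat 1 (\<lambda>_. e)) (0\<^sub>m 1 m) (0\<^sub>m m 1) B4 $$ (i,j) = B $$ (i,j)"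
    proof (cases "i = 0")
      case True
      thus ?thesis using ij' Brow[OF ij'(2)] Bcol[OF ij'(2)] ereal by auto
    next
      case False
      show ?thesis
      proof (cases "j = 0")
        case True
        thus ?thesis using ij' Bcol[OF ij'(1)] False by auto
      next
        case False
        thus ?thesis using ij' \<open>i \<noteq> 0\<close> unfolding B4_def by auto
      qed
    qed
  qed (use Bc B4c in auto)
  finally have BF: "B = F * dmat (Suc m) d * mat_adjoint F" by simp
  have "A = W * B * mat_adjoint W"
  proof -
    have "W * B * mat_adjoint W = W * (B * mat_adjoint W)" using Wc Bc aW by (rule assoc_mult_mat)
    also have "B * mat_adjoint W = mat_adjoint W * (A * (W * mat_adjoint W))"
      unfolding B_def using aW A Wc by (simp add: assoc_mult_mat[of _ "Suc m" "Suc m" _ "Suc m" _ "Suc m"])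
    also have "W * mat_adjoint W = 1\<^sub>m (Suc m)" using W(1) unfolding unitary_def by auto
    also have "W * (mat_adjoint W * (A * 1\<^sub>m (Suc m))) = A"
      using unitary_cancel(2)[OF W(1), of A] A by simp
    finally show ?thesis by simp
  qed
  also have "\<dots> = (W * F) * dmat (Suc m) d * mat_adjoint (W * F)"
  proof -
    have aF: "mat_adjoint F \<in> carrier_mat (Suc m) (Suc m)" using Fc by auto
    have D: "dmat (Suc m) d \<in> carrier_mat (Suc m) (Suc m)" by simp
    show ?thesis
    unfolding BF adj_mult[OF Wc Fc] using Wc Fc aW aF D
    by (simp add: assoc_mult_mat[of _ "Suc m" "Suc m" _ "Suc m" _ "Suc m"] mult_carrier_mat[of _ "Suc m" "Suc m"])
  qed
  finally have AWF: "A = (W * F) * dmat (Suc m) d * mat_adjoint (W * F)" .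
  have un: "unitary (W * F) (Suc m)" using unitary_mult[OF W(1)] unitary_bdiag[OF IH(1)] unfolding F_def by blast
  have real: "\<forall>i<Suc m. d i = of_real (Re (d i))"
  proof (intro allI impI)
    fix i assume "i < Suc m"
    show "d i = of_real (Re (d i))"
    proof (cases "i = 0")
      case True
      thus ?thesis using ereal unfolding d_def by (simp add: complex_eq_iff)
    next
      case False
      thus ?thesis using IH(2) \<open>i < Suc m\<close> unfolding d_def by auto
    qed
  qed
  show ?case using un real AWF by blast
qed



lemma sqm: "A \<in> carrier_mat n n \<Longrightarrow> B \<in> carrier_mat n n \<Longrightarrow> A * B \<in> carrier_mat n n"
  by (rule mult_carrier_mat)

lemma cscal_sum: assumes "v \<in> carrier_vec n" "w \<in> carrier_vec n"
  shows "v \<bullet>c (w :: complex vec) = (\<Sum>i<n. v $ i * cnj (w $ i))"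
  using assms by (simp add: scalar_prod_def atLeast0LessThan)

lemma cscal_comm: assumes "v \<in> carrier_vec n" "w \<in> carrier_vec n"
  shows "v \<bullet>c (w :: complex vec) = cnj (w \<bullet>c v)"
  using assms by (simp add: cscal_sum[of _ n] mult.commute)

lemma adj_shift: assumes A: "A \<in> carrier_mat n n" and v: "v \<in> carrier_vec n" and w: "w \<in> carrier_vec n"
  shows "(A *\<^sub>v v) \<bullet>c (w :: complex vec) = v \<bullet>c (mat_adjoint A *\<^sub>v w)"
proof -
  have "(A *\<^sub>v v) \<bullet>c w = (\<Sum>i<n. (\<Sum>j<n. A $$ (i,j) * v $ j) * cnj (w $ i))"
    using A v w by (simp add: cscal_sum[of _ n] scalar_prod_def atLeast0LessThan)
  also have "\<dots> = (\<Sum>i<n. \<Sum>j<n. A $$ (i,j) * v $ j * cnj (w $ i))"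
    by (simp add: sum_distrib_right)
  also have "\<dots> = (\<Sum>j<n. \<Sum>i<n. A $$ (i,j) * v $ j * cnj (w $ i))" by (rule sum.swap)
  also have "\<dots> = (\<Sum>j<n. v $ j * cnj (\<Sum>i<n. cnj (A $$ (i,j)) * w $ i))"
    by (simp add: sum_distrib_left mult_ac)
  also have "\<dots> = v \<bullet>c (mat_adjoint A *\<^sub>v w)"
    using A v w by (simp add: cscal_sum[of _ n] scalar_prod_def atLeast0LessThan)
  finally show ?thesis .
qed

lemma herm_qf_real: assumes A: "A \<in> carrier_mat n n" "mat_adjoint A = A" and v: "v \<in> carrier_vec n"
  shows "(A *\<^sub>v v) \<bullet>c v = of_real (Re ((A *\<^sub>v v) \<bullet>c v))"
proof -
  have "(A *\<^sub>v v) \<bullet>c v = v \<bullet>c (A *\<^sub>v v)" using adj_shift[OF A(1) v v] A(2) by simp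
  also have "\<dots> = cnj ((A *\<^sub>v v) \<bullet>c v)" using cscal_comm[of v n "A *\<^sub>v v"] A v by simp
  finally show ?thesis by (simp add: complex_eq_iff)
qed

lemma nonneg_opD: assumes "nonneg_op A" "A \<in> carrier_mat n n"
  shows "mat_adjoint A = A" "\<And>v. v \<in> carrier_vec n \<Longrightarrow> Re ((A *\<^sub>v v) \<bullet>c v) \<ge> 0"
  using assms unfolding nonneg_op_def by auto

lemma nonneg_opI: assumes "A \<in> carrier_mat n n" "mat_adjoint A = A" "\<And>v. v \<in> carrier_vec n \<Longrightarrow> Re ((A *\<^sub>v v) \<bullet>c v) \<ge> 0"
  shows "nonneg_op A"
  using assms unfolding nonneg_op_def by auto

lemma dmat_mult_vec: "v \<in> carrier_vec n \<Longrightarrow> dmat n d *\<^sub>v v = vec n (\<lambda>i. d i * v $ i)"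
proof (rule eq_vecI)
  fix i assume v: "v \<in> carrier_vec n" and i: "i < dim_vec (vec n (\<lambda>i. d i * v $ i))"
  hence i: "i < n" by simp
  have "(dmat n d *\<^sub>v v) $ i = (\<Sum>k<n. (if i = k then d i else 0) * v $ k)"
    using i v by (simp add: scalar_prod_def atLeast0LessThan)
  also have "\<dots> = (\<Sum>k<n. if k = i then d i * v $ i else 0)" by (rule sum.cong, auto)
  also have "\<dots> = d i * v $ i" using i by simp
  finally show "(dmat n d *\<^sub>v v) $ i = vec n (\<lambda>i. d i * v $ i) $ i" using i by simp
qed simp

lemma qf_spectral: assumes U: "unitary U n" and x: "x \<in> carrier_vec n"
  shows "((U * dmat n d * mat_adjoint U) *\<^sub>v x) \<bullet>c x = (\<Sum>i<n. d i * of_real ((cmod ((mat_adjoint U *\<^sub>v x) $ i))\<^sup>2))"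
proof -
  have Uc: "U \<in> carrier_mat n n" and aU: "mat_adjoint U \<in> carrier_mat n n" using U unfolding unitary_def by auto
  define y where "y = mat_adjoint U *\<^sub>v x"
  have y: "y \<in> carrier_vec n" unfolding y_def using aU x by simp
  have "(U * dmat n d * mat_adjoint U) *\<^sub>v x = (U * dmat n d) *\<^sub>v y"
    unfolding y_def using Uc aU x by (intro assoc_mult_mat_vec[of _ n n _ n], auto)
  also have "\<dots> = U *\<^sub>v (dmat n d *\<^sub>v y)"
    using Uc y by (intro assoc_mult_mat_vec[of _ n n _ n], auto)
  finally have "(U * dmat n d * mat_adjoint U) *\<^sub>v x = U *\<^sub>v (dmat n d *\<^sub>v y)" .
  moreover have z: "dmat n d *\<^sub>v y \<in> carrier_vec n" using y by (intro mult_mat_vec_carrier[of _ n n], auto)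
  ultimately have "((U * dmat n d * mat_adjoint U) *\<^sub>v x) \<bullet>c x = (dmat n d *\<^sub>v y) \<bullet>c y"
    using adj_shift[OF Uc z x] unfolding y_def by simp
  also have "\<dots> = (\<Sum>i<n. d i * y $ i * cnj (y $ i))"
    using y by (simp add: dmat_mult_vec cscal_sum[of _ n])
  also have "\<dots> = (\<Sum>i<n. d i * of_real ((cmod (y $ i))\<^sup>2))"
    by (rule sum.cong, simp_all only: mult.assoc complex_norm_square)
  finally show ?thesis unfolding y_def .
qed

lemma col_unitary_eigen: assumes U: "unitary U n" and i: "i < n"
  shows "(U * dmat n d * mat_adjoint U) *\<^sub>v col U i = d i \<cdot>\<^sub>v col U i"
    "col U i \<bullet>c col U i = 1" "col U i \<in> carrier_vec n"
proof -
  have Uc: "U \<in> carrier_mat n n" and aU: "mat_adjoint U \<in> carrier_mat n n"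
    and UU: "mat_adjoint U * U = 1\<^sub>m n" using U unfolding unitary_def by auto
  have c: "col U i = U *\<^sub>v unit_vec n i" using Uc i by (intro eq_vecI, auto)
  have "mat_adjoint U *\<^sub>v col U i = (mat_adjoint U * U) *\<^sub>v unit_vec n i"
    unfolding c using Uc aU by (intro assoc_mult_mat_vec[symmetric, of _ n n _ n], auto)
  also have "\<dots> = unit_vec n i" using UU by simp
  finally have ac: "mat_adjoint U *\<^sub>v col U i = unit_vec n i" .
  have "(U * dmat n d * mat_adjoint U) *\<^sub>v col U i = (U * dmat n d) *\<^sub>v (mat_adjoint U *\<^sub>v col U i)"
    using Uc aU by (intro assoc_mult_mat_vec[of _ n n _ n], auto)
  also have "\<dots> = U *\<^sub>v (dmat n d *\<^sub>v unit_vec n i)"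
    unfolding ac using Uc by (intro assoc_mult_mat_vec[of _ n n _ n], auto)
  finally have "(U * dmat n d * mat_adjoint U) *\<^sub>v col U i = U *\<^sub>v (dmat n d *\<^sub>v unit_vec n i)" .
  also have "dmat n d *\<^sub>v unit_vec n i = d i \<cdot>\<^sub>v unit_vec n i"
    by (rule eq_vecI, auto simp: dmat_mult_vec unit_vec_def)
  also have "U *\<^sub>v (d i \<cdot>\<^sub>v unit_vec n i) = d i \<cdot>\<^sub>v col U i"
    unfolding c using Uc by (intro mult_mat_vec[of _ n n], auto)
  finally show "(U * dmat n d * mat_adjoint U) *\<^sub>v col U i = d i \<cdot>\<^sub>v col U i" .
  show "col U i \<in> carrier_vec n" using Uc unfolding carrier_vec_def by simp
  have "col U i \<bullet>c col U i = (mat_adjoint U * U) $$ (i,i)"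
    using Uc i by (simp add: scalar_prod_def mult.commute)
  thus "col U i \<bullet>c col U i = 1" using UU i by simp
qed

lemma psd_spectral: assumes A: "nonneg_op A" "A \<in> carrier_mat n n"
  shows "\<exists>U d. unitary U n \<and> (\<forall>i<n. d i = of_real (Re (d i)) \<and> Re (d i) \<ge> 0) \<and> A = U * dmat n d * mat_adjoint U"
proof -
  obtain U d where Ud: "unitary U n" "\<forall>i<n. d i = of_real (Re (d i))" "A = U * dmat n d * mat_adjoint U"
    using spectral[OF A(2) nonneg_opD(1)[OF A]] by blast
  have "Re (d i) \<ge> 0" if i: "i < n" for i
  proof -
    note ce = col_unitary_eigen(1)[OF Ud(1) i, of d] col_unitary_eigen(2,3)[OF Ud(1) i]
    have "(A *\<^sub>v col U i) \<bullet>c col U i = (d i \<cdot>\<^sub>v col U i) \<bullet>c col U i" using ce Ud(3) by simp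
    also have "\<dots> = d i * (col U i \<bullet>c col U i)" using ce(3) by (simp add: smult_scalar_prod_distrib[of _ n])
    also have "\<dots> = d i" using ce(2) by simp
    finally show ?thesis using nonneg_opD(2)[OF A ce(3)] by simp
  qed
  thus ?thesis using Ud by blast
qed

lemma psd_of_spectral: assumes U: "unitary U n" and d: "\<forall>i<n. d i = of_real (Re (d i)) \<and> Re (d i) \<ge> 0"
  shows "nonneg_op (U * dmat n d * mat_adjoint U)" "U * dmat n d * mat_adjoint U \<in> carrier_mat n n"
proof -
  have Uc: "U \<in> carrier_mat n n" and aU: "mat_adjoint U \<in> carrier_mat n n" using U unfolding unitary_def by auto
  show c: "U * dmat n d * mat_adjoint U \<in> carrier_mat n n" using Uc aU by auto
  have "mat_adjoint (U * dmat n d * mat_adjoint U) = mat_adjoint (mat_adjoint U) * mat_adjoint (U * dmat n d)"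
    using Uc aU by (intro adj_mult[of _ n n _ n], auto)
  also have "\<dots> = U * (mat_adjoint (dmat n d) * mat_adjoint U)" using adj_mult[OF Uc, of "dmat n d" n] Uc aU by simp
  also have "mat_adjoint (dmat n d) = dmat n d" unfolding dmat_adj
    by (rule dmat_cong, insert d, metis complex_cnj_complex_of_real)
  also have "U * (dmat n d * mat_adjoint U) = U * dmat n d * mat_adjoint U" using Uc aU by (intro assoc_mult_mat[symmetric, of _ n n _ n _ n], auto)
  finally have h: "mat_adjoint (U * dmat n d * mat_adjoint U) = U * dmat n d * mat_adjoint U" .
  show "nonneg_op (U * dmat n d * mat_adjoint U)"
  proof (rule nonneg_opI[OF c h])
    fix v :: "complex vec" assume v: "v \<in> carrier_vec n"
    have "Re ((U * dmat n d * mat_adjoint U *\<^sub>v v) \<bullet>c v) = (\<Sum>i<n. Re (d i) * (cmod ((mat_adjoint U *\<^sub>v v) $ i))\<^sup>2)"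
      unfolding qf_spectral[OF U v] Re_sum by (rule sum.cong, auto)
    also have "\<dots> \<ge> 0"
    proof (intro sum_nonneg mult_nonneg_nonneg)
      fix i assume "i \<in> {..<n}" thus "Re (d i) \<ge> 0" using d by blast
    qed auto
    finally show "Re ((U * dmat n d * mat_adjoint U *\<^sub>v v) \<bullet>c v) \<ge> 0" .
  qed
qed

lemma sqrt_exists: assumes A: "nonneg_op A" "A \<in> carrier_mat n n"
  shows "\<exists>B. nonneg_op B \<and> B \<in> carrier_mat n n \<and> B * B = A"
proof -
  obtain U d where Ud: "unitary U n" "\<forall>i<n. d i = of_real (Re (d i)) \<and> Re (d i) \<ge> 0" "A = U * dmat n d * mat_adjoint U"
    using psd_spectral[OF A] by blast
  have Uc: "U \<in> carrier_mat n n" and aU: "mat_adjoint U \<in> carrier_mat n n" and UU: "mat_adjoint U * U = 1\<^sub>m n"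
    using Ud unfolding unitary_def by auto
  define e where "e = (\<lambda>i. complex_of_real (sqrt (Re (d i))))"
  have e: "\<forall>i<n. e i = of_real (Re (e i)) \<and> Re (e i) \<ge> 0"
  proof (intro allI impI conjI)
    fix i assume "i < n"
    hence "Re (d i) \<ge> 0" using Ud(2) by blast
    thus "Re (e i) \<ge> 0" unfolding e_def by simp
  qed (simp add: e_def)
  have ee: "dmat n e * dmat n e = dmat n d" unfolding dmat_mult
  proof (rule dmat_cong)
    fix i assume i: "i < n"
    hence di: "d i = of_real (Re (d i))" "Re (d i) \<ge> 0" using Ud(2) by auto
    have "e i * e i = of_real (sqrt (Re (d i)) * sqrt (Re (d i)))" unfolding e_def by (simp only: of_real_mult)
    also have "\<dots> = of_real (Re (d i))" using di(2) by simp
    finally show "e i * e i = d i" using di(1) by simp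
  qed
  define B where "B = U * dmat n e * mat_adjoint U"
  note Bp = psd_of_spectral[OF Ud(1) e, folded B_def]
  have "B * B = U * (dmat n e * (mat_adjoint U * (U * (dmat n e * mat_adjoint U))))"
    unfolding B_def using Uc aU by (simp add: assoc_mult_mat[of _ n n _ n _ n] sqm)
  also have "mat_adjoint U * (U * (dmat n e * mat_adjoint U)) = dmat n e * mat_adjoint U"
    by (rule unitary_cancel(1)[OF Ud(1)], use aU in auto)
  also have "U * (dmat n e * (dmat n e * mat_adjoint U)) = A"
    unfolding Ud(3) using Uc aU ee[symmetric] by (simp add: assoc_mult_mat[of _ n n _ n _ n] sqm)
  finally show ?thesis using Bp by blast
qed

lemma psd_kernel: assumes B: "nonneg_op B" "B \<in> carrier_mat n n" and x: "x \<in> carrier_vec n"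
  and q: "Re ((B *\<^sub>v x) \<bullet>c x) = 0"
  shows "B *\<^sub>v x = 0\<^sub>v n"
proof -
  obtain S where S: "nonneg_op S" "S \<in> carrier_mat n n" "S * S = B" using sqrt_exists[OF B] by blast
  have Sx: "S *\<^sub>v x \<in> carrier_vec n" using S(2) x by simp
  have "(B *\<^sub>v x) \<bullet>c x = (S *\<^sub>v (S *\<^sub>v x)) \<bullet>c x" unfolding S(3)[symmetric] using S(2) x by simp
  also have "\<dots> = (S *\<^sub>v x) \<bullet>c (S *\<^sub>v x)" using adj_shift[OF S(2) Sx x] nonneg_opD(1)[OF S(1,2)] by simp
  finally have "(S *\<^sub>v x) \<bullet>c (S *\<^sub>v x) = (B *\<^sub>v x) \<bullet>c x" ..
  moreover have "(B *\<^sub>v x) \<bullet>c x = of_real (Re ((B *\<^sub>v x) \<bullet>c x))"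
    using herm_qf_real[OF B(2) nonneg_opD(1)[OF B] x] .
  ultimately have "(S *\<^sub>v x) \<bullet>c (S *\<^sub>v x) = 0" using q by simp
  hence "S *\<^sub>v x = 0\<^sub>v n" using Sx by simp
  hence "S *\<^sub>v (S *\<^sub>v x) = 0\<^sub>v n" using S(2) by (intro eq_vecI, auto)
  thus ?thesis unfolding S(3)[symmetric] using S(2) x by simp
qed

lemma cscal_expand: assumes "a \<in> carrier_vec n" "c \<in> carrier_vec n"
  shows "(a + c) \<bullet>c (a - c) = (a \<bullet>c a - c \<bullet>c c) + (c \<bullet>c a - a \<bullet>c (c :: complex vec))"
  using assms by (simp add: cscal_sum[of _ n] algebra_simps sum.distrib sum_subtractf)

lemma sqrt_unique: assumes B: "nonneg_op B" "B \<in> carrier_mat n n" and C: "nonneg_op C" "C \<in> carrier_mat n n"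
  and BC: "B * B = C * C"
  shows "B = C"
proof -
  define D where "D = B - C"
  have Dc: "D \<in> carrier_mat n n" unfolding D_def using C(2) by (rule minus_carrier_mat)
  have hB: "mat_adjoint B = B" and hC: "mat_adjoint C = C" using nonneg_opD(1) B C by auto
  have hD: "mat_adjoint D = D" unfolding D_def using adj_minus[OF B(2) C(2)] hB hC by simp
  obtain V l where Vl: "unitary V n" "\<forall>i<n. l i = of_real (Re (l i))" "D = V * dmat n l * mat_adjoint V"
    using spectral[OF Dc hD] by blast
  have l0: "l k = 0" if k: "k < n" for k
  proof (rule ccontr)
    assume lk: "l k \<noteq> 0"
    define x where "x = col V k"
    note ce = col_unitary_eigen(1)[OF Vl(1) k, of l, folded Vl(3) x_def] col_unitary_eigen(2,3)[OF Vl(1) k, folded x_def]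
    have x: "x \<in> carrier_vec n" using ce by simp
    define a where "a = B *\<^sub>v x"
    define c where "c = C *\<^sub>v x"
    have ac: "a \<in> carrier_vec n" "c \<in> carrier_vec n" unfolding a_def c_def using B C x by auto
    have Dx: "a - c = l k \<cdot>\<^sub>v x" unfolding a_def c_def using ce(1) unfolding D_def
      using B(2) C(2) x by (simp add: minus_mult_distrib_mat_vec)
    have aa: "a \<bullet>c a = (B *\<^sub>v a) \<bullet>c x" using adj_shift[OF B(2) ac(1) x] hB unfolding a_def by simp
    have cc: "c \<bullet>c c = (C *\<^sub>v c) \<bullet>c x" using adj_shift[OF C(2) ac(2) x] hC unfolding c_def by simp
    have "B *\<^sub>v a = (B * B) *\<^sub>v x" unfolding a_def using B(2) x by simp
    also have "\<dots> = (C * C) *\<^sub>v x" unfolding BC ..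
    also have "\<dots> = C *\<^sub>v c" unfolding c_def using C(2) x by simp
    finally have "a \<bullet>c a = c \<bullet>c c" using aa cc by simp
    hence eq: "(a + c) \<bullet>c (a - c) = c \<bullet>c a - a \<bullet>c c" using cscal_expand[OF ac] by simp
    have "Re (c \<bullet>c a - a \<bullet>c c) = 0" using cscal_comm[OF ac(2,1)] by simp
    hence re0: "Re ((a + c) \<bullet>c (a - c)) = 0" using eq by simp
    have qa: "a \<bullet>c x = of_real (Re (a \<bullet>c x))" "Re (a \<bullet>c x) \<ge> 0"
      unfolding a_def using herm_qf_real[OF B(2) hB x] nonneg_opD(2)[OF B x] by auto
    have qc: "c \<bullet>c x = of_real (Re (c \<bullet>c x))" "Re (c \<bullet>c x) \<ge> 0"
      unfolding c_def using herm_qf_real[OF C(2) hC x] nonneg_opD(2)[OF C x] by auto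
    have "(a + c) \<bullet>c (a - c) = (a + c) \<bullet> (cnj (l k) \<cdot>\<^sub>v conjugate x)"
      unfolding Dx by (simp add: conjugate_smult_vec)
    also have "\<dots> = cnj (l k) * ((a + c) \<bullet>c x)" using ac x by (simp add: scalar_prod_smult_distrib[of _ n])
    also have "(a + c) \<bullet>c x = a \<bullet>c x + c \<bullet>c x" using ac x by (simp add: add_scalar_prod_distrib[of _ n])
    finally have fin: "(a + c) \<bullet>c (a - c) = cnj (l k) * (a \<bullet>c x + c \<bullet>c x)" .
    obtain L where L: "l k = of_real L" using Vl(2) k by blast
    obtain ra where ra: "a \<bullet>c x = of_real ra" "ra \<ge> 0" using qa by blast
    obtain rc where rc: "c \<bullet>c x = of_real rc" "rc \<ge> 0" using qc by blast
    have "(a + c) \<bullet>c (a - c) = of_real (L * (ra + rc))" unfolding fin L ra rc by simp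
    with re0 have "L * (ra + rc) = 0" by simp
    moreover have "L \<noteq> 0" using L lk by simp
    ultimately have "ra + rc = 0" by simp
    hence "ra = 0" "rc = 0" using ra rc by auto
    hence "Re (a \<bullet>c x) = 0" "Re (c \<bullet>c x) = 0" using ra rc by auto
    hence "a = 0\<^sub>v n" "c = 0\<^sub>v n" unfolding a_def c_def using psd_kernel[OF B x] psd_kernel[OF C x] by auto
    hence "l k \<cdot>\<^sub>v x = 0\<^sub>v n" using Dx by simp
    hence "(l k \<cdot>\<^sub>v x) \<bullet>c x = 0" using x by (simp add: cscal_sum[of _ n])
    hence "l k * (x \<bullet>c x) = 0" using x by (simp add: smult_scalar_prod_distrib[of _ n])
    thus False using ce(2) lk by simp
  qed
  have "D = V * dmat n (\<lambda>_. 0) * mat_adjoint V" unfolding Vl(3) using l0 by (metis dmat_cong)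
  also have "\<dots> = 0\<^sub>m n n" using Vl(1) unfolding dmat_zero unitary_def by auto
  finally have "B - C = 0\<^sub>m n n" unfolding D_def .
  show ?thesis
  proof (rule eq_matI)
    fix i j assume ij: "i < dim_row C" "j < dim_col C"
    have "(B - C) $$ (i,j) = 0" using \<open>B - C = 0\<^sub>m n n\<close> ij C(2) by simp
    thus "B $$ (i,j) = C $$ (i,j)" using ij B(2) C(2) by simp
  qed (use B(2) C(2) in auto)
qed

lemma op_sqrt_eq: assumes B: "nonneg_op B" "B \<in> carrier_mat n n" and A: "B * B = A"
  shows "op_sqrt A = B"
  unfolding op_sqrt_def
proof (rule the1_equality)
  have dA: "dim_row A = n" using A B(2) by auto
  show "\<exists>!X. nonneg_op X \<and> dim_row X = dim_row A \<and> X * X = A"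
  proof (rule ex1I[of _ B])
    show "nonneg_op B \<and> dim_row B = dim_row A \<and> B * B = A" using B A dA by auto
    fix X assume X: "nonneg_op X \<and> dim_row X = dim_row A \<and> X * X = A"
    have "X \<in> carrier_mat (dim_row X) (dim_row X)" using X unfolding nonneg_op_def by blast
    hence Xc: "X \<in> carrier_mat n n" using dA X by simp
    have "X * X = B * B" using X A by simp
    thus "X = B" by (rule sqrt_unique[OF conjunct1[OF X] Xc B])
  qed
  show "nonneg_op B \<and> dim_row B = dim_row A \<and> B * B = A" using B A dA by auto
qed

lemma op_sqrt: assumes A: "nonneg_op A" "A \<in> carrier_mat n n"
  shows "nonneg_op (op_sqrt A)" "op_sqrt A \<in> carrier_mat n n" "op_sqrt A * op_sqrt A = A"
proof -
  obtain B where B: "nonneg_op B" "B \<in> carrier_mat n n" "B * B = A" using sqrt_exists[OF A] by blast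
  have "op_sqrt A = B" by (rule op_sqrt_eq[OF B])
  thus "nonneg_op (op_sqrt A)" "op_sqrt A \<in> carrier_mat n n" "op_sqrt A * op_sqrt A = A" using B by auto
qed



lemma gram_psd: assumes Y: "Y \<in> carrier_mat n n"
  shows "nonneg_op (mat_adjoint Y * Y)" "mat_adjoint Y * Y \<in> carrier_mat n n"
proof -
  have aY: "mat_adjoint Y \<in> carrier_mat n n" using Y by auto
  show c: "mat_adjoint Y * Y \<in> carrier_mat n n" using Y aY by auto
  have h: "mat_adjoint (mat_adjoint Y * Y) = mat_adjoint Y * Y" using adj_mult[OF aY Y] by simp
  show "nonneg_op (mat_adjoint Y * Y)"
  proof (rule nonneg_opI[OF c h])
    fix v :: "complex vec" assume v: "v \<in> carrier_vec n"
    have Yv: "Y *\<^sub>v v \<in> carrier_vec n" using Y v by simp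
    have "(mat_adjoint Y * Y *\<^sub>v v) \<bullet>c v = (mat_adjoint Y *\<^sub>v (Y *\<^sub>v v)) \<bullet>c v"
      using aY Y v by (simp add: assoc_mult_mat_vec[of _ n n _ n])
    also have "\<dots> = (Y *\<^sub>v v) \<bullet>c (Y *\<^sub>v v)" using adj_shift[OF aY Yv v] by simp
    finally show "Re ((mat_adjoint Y * Y *\<^sub>v v) \<bullet>c v) \<ge> 0"
      using cscalar_self_real[OF Yv] by simp
  qed
qed

lemma trace_psd_nonneg: assumes "nonneg_op N" "N \<in> carrier_mat n n"
  shows "Re (cmat_trace N) \<ge> 0"
proof -
  have "Re (cmat_trace N) = (\<Sum>i<n. Re ((N *\<^sub>v unit_vec n i) \<bullet>c unit_vec n i))"
    unfolding cmat_trace_def Re_sum using assms(2)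
  proof (intro sum.cong)
    fix i assume i: "i \<in> {..<n}"
    have "(N *\<^sub>v unit_vec n i) \<bullet>c unit_vec n i = (\<Sum>k<n. (N *\<^sub>v unit_vec n i) $ k * cnj (unit_vec n i $ k))"
      using assms(2) by (intro cscal_sum, auto)
    also have "\<dots> = (\<Sum>k<n. if k = i then (N *\<^sub>v unit_vec n i) $ i else 0)"
      by (rule sum.cong, auto simp: unit_vec_def)
    also have "\<dots> = (N *\<^sub>v unit_vec n i) $ i" using i by simp
    also have "\<dots> = N $$ (i,i)" using i assms(2) by simp
    finally show "Re (N $$ (i,i)) = Re ((N *\<^sub>v unit_vec n i) \<bullet>c unit_vec n i)" by simp
  qed auto
  also have "\<dots> \<ge> 0" using nonneg_opD(2)[OF assms] by (intro sum_nonneg, simp)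
  finally show ?thesis .
qed

lemma trace_psd_prod: assumes K: "nonneg_op K" "K \<in> carrier_mat n n" and L: "nonneg_op L" "L \<in> carrier_mat n n"
  shows "Re (cmat_trace (K * L)) \<ge> 0"
proof -
  note Q = op_sqrt[OF L]
  define Q where "Q = op_sqrt L"
  have Qc: "Q \<in> carrier_mat n n" and hQ: "mat_adjoint Q = Q" and QQ: "Q * Q = L"
    using Q nonneg_opD(1)[OF Q(1,2)] unfolding Q_def by auto
  have "cmat_trace (K * L) = cmat_trace (K * Q * Q)" unfolding QQ[symmetric] using K(2) Qc by simp
  also have "\<dots> = cmat_trace (Q * (K * Q))" using trace_comm[of "K * Q" n n Q] K(2) Qc by simp
  also have "\<dots> = cmat_trace (mat_adjoint Q * K * Q)" using hQ K(2) Qc by simp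
  finally have eq: "cmat_trace (K * L) = cmat_trace (mat_adjoint Q * K * Q)" .
  have c: "mat_adjoint Q * K * Q \<in> carrier_mat n n" using Qc K(2) by auto
  have "nonneg_op (mat_adjoint Q * K * Q)"
  proof (rule nonneg_opI[OF c])
    show "mat_adjoint (mat_adjoint Q * K * Q) = mat_adjoint Q * K * Q"
      using adj_mult[of "mat_adjoint Q * K" n n Q n] adj_mult[of "mat_adjoint Q" n n K n] Qc K(2) nonneg_opD(1)[OF K] hQ
      by simp
    fix v :: "complex vec" assume v: "v \<in> carrier_vec n"
    have Qv: "Q *\<^sub>v v \<in> carrier_vec n" using Qc v by simp
    have "(mat_adjoint Q * K * Q *\<^sub>v v) = mat_adjoint Q *\<^sub>v (K *\<^sub>v (Q *\<^sub>v v))"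
      using Qc K(2) v by (simp add: assoc_mult_mat_vec[of _ n n _ n] sqm)
    hence "(mat_adjoint Q * K * Q *\<^sub>v v) \<bullet>c v = (K *\<^sub>v (Q *\<^sub>v v)) \<bullet>c (Q *\<^sub>v v)"
      using adj_shift[of "mat_adjoint Q" n "K *\<^sub>v (Q *\<^sub>v v)" v] Qc K(2) Qv v by simp
    thus "Re ((mat_adjoint Q * K * Q *\<^sub>v v) \<bullet>c v) \<ge> 0" using nonneg_opD(2)[OF K Qv] by simp
  qed
  thus ?thesis using trace_psd_nonneg[OF _ c] eq by simp
qed

lemma real_CS: fixes a b :: "'a \<Rightarrow> real" assumes "finite I"
  shows "(\<Sum>i\<in>I. a i * b i)\<^sup>2 \<le> (\<Sum>i\<in>I. (a i)\<^sup>2) * (\<Sum>i\<in>I. (b i)\<^sup>2)"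
proof -
  have "0 \<le> (\<Sum>i\<in>I. \<Sum>j\<in>I. (a i * b j - a j * b i)\<^sup>2)" by (intro sum_nonneg, simp)
  also have "\<dots> = (\<Sum>i\<in>I. \<Sum>j\<in>I. (a i)\<^sup>2 * (b j)\<^sup>2) + (\<Sum>i\<in>I. \<Sum>j\<in>I. (a j)\<^sup>2 * (b i)\<^sup>2)
      - 2 * (\<Sum>i\<in>I. \<Sum>j\<in>I. (a i * b i) * (a j * b j))"
    by (simp add: power2_eq_square algebra_simps sum.distrib sum_subtractf sum_distrib_left)
  also have "(\<Sum>i\<in>I. \<Sum>j\<in>I. (a j)\<^sup>2 * (b i)\<^sup>2) = (\<Sum>i\<in>I. \<Sum>j\<in>I. (a i)\<^sup>2 * (b j)\<^sup>2)"
    by (subst sum.swap, simp)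
  also have "(\<Sum>i\<in>I. \<Sum>j\<in>I. (a i)\<^sup>2 * (b j)\<^sup>2) = (\<Sum>i\<in>I. (a i)\<^sup>2) * (\<Sum>i\<in>I. (b i)\<^sup>2)"
    by (simp add: sum_product)
  also have "(\<Sum>i\<in>I. \<Sum>j\<in>I. (a i * b i) * (a j * b j)) = (\<Sum>i\<in>I. a i * b i)\<^sup>2"
    by (simp add: sum_product power2_eq_square)
  finally show ?thesis by simp
qed

lemma complex_CS: fixes a b :: "'a \<Rightarrow> complex" assumes "finite I"
  shows "Re (\<Sum>i\<in>I. cnj (a i) * b i) \<le> sqrt (\<Sum>i\<in>I. (cmod (a i))\<^sup>2) * sqrt (\<Sum>i\<in>I. (cmod (b i))\<^sup>2)"
proof -
  have "Re (\<Sum>i\<in>I. cnj (a i) * b i) \<le> (\<Sum>i\<in>I. cmod (a i) * cmod (b i))"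
    unfolding Re_sum
  proof (rule sum_mono)
    fix i show "Re (cnj (a i) * b i) \<le> cmod (a i) * cmod (b i)"
      using complex_Re_le_cmod[of "cnj (a i) * b i"] by (simp add: norm_mult)
  qed
  also have "\<dots> \<le> sqrt ((\<Sum>i\<in>I. cmod (a i) * cmod (b i))\<^sup>2)" by simp
  also have "\<dots> \<le> sqrt ((\<Sum>i\<in>I. (cmod (a i))\<^sup>2) * (\<Sum>i\<in>I. (cmod (b i))\<^sup>2))"
    by (rule real_sqrt_le_mono, rule real_CS[OF assms])
  also have "\<dots> = sqrt (\<Sum>i\<in>I. (cmod (a i))\<^sup>2) * sqrt (\<Sum>i\<in>I. (cmod (b i))\<^sup>2)" by (simp add: real_sqrt_mult)
  finally show ?thesis .
qed

lemma trace_adj_mult: assumes "A \<in> carrier_mat n m" "B \<in> carrier_mat n m"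
  shows "cmat_trace (mat_adjoint A * B) = (\<Sum>p\<in>{..<m} \<times> {..<n}. cnj (A $$ (snd p, fst p)) * B $$ (snd p, fst p))"
  using assms by (simp add: cmat_trace_def scalar_prod_def atLeast0LessThan sum.cartesian_product case_prod_beta)

lemma frob_CS: assumes A: "A \<in> carrier_mat n m" and B: "B \<in> carrier_mat n m"
  shows "Re (cmat_trace (mat_adjoint A * B)) \<le> sqrt (Re (cmat_trace (mat_adjoint A * A))) * sqrt (Re (cmat_trace (mat_adjoint B * B)))"
proof -
  have sq: "Re (cmat_trace (mat_adjoint C * C)) = (\<Sum>p\<in>{..<m} \<times> {..<n}. (cmod (C $$ (snd p, fst p)))\<^sup>2)"
    if C: "C \<in> carrier_mat n m" for C
    unfolding trace_adj_mult[OF C C] Re_sum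
    by (rule sum.cong, simp_all add: mult.commute complex_mult_cnj cmod_def)
  show ?thesis unfolding trace_adj_mult[OF A B] sq[OF A] sq[OF B]
    by (rule complex_CS, simp)
qed

lemma trace_unitary_conj: assumes U: "unitary U n" and D: "D \<in> carrier_mat n n"
  shows "cmat_trace (U * D * mat_adjoint U) = cmat_trace D"
proof -
  have Uc: "U \<in> carrier_mat n n" and aU: "mat_adjoint U \<in> carrier_mat n n" and UU: "mat_adjoint U * U = 1\<^sub>m n"
    using U unfolding unitary_def by auto
  have "cmat_trace (U * D * mat_adjoint U) = cmat_trace (mat_adjoint U * (U * D))"
    by (rule trace_comm[of "U * D" n n "mat_adjoint U"]) (use Uc D aU in \<open>auto intro: sqm\<close>)
  also have "mat_adjoint U * (U * D) = D" by (rule unitary_cancel(1)[OF U D])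
  finally show ?thesis .
qed



lemma psd_spectral_real: assumes A: "nonneg_op A" "A \<in> carrier_mat n n"
  shows "\<exists>U r. unitary U n \<and> (\<forall>i<n. r i \<ge> 0) \<and> A = U * dmat n (\<lambda>i. of_real (r i)) * mat_adjoint U"
proof -
  obtain U d where Ud: "unitary U n" "\<forall>i<n. d i = of_real (Re (d i)) \<and> Re (d i) \<ge> 0" "A = U * dmat n d * mat_adjoint U"
    using psd_spectral[OF A] by blast
  have "dmat n d = dmat n (\<lambda>i. of_real (Re (d i)))" by (rule dmat_cong, insert Ud(2), blast)
  thus ?thesis using Ud by (intro exI[of _ U] exI[of _ "\<lambda>i. Re (d i)"], auto)
qed

lemma dmat_real_adj: "mat_adjoint (dmat n (\<lambda>i. complex_of_real (r i))) = dmat n (\<lambda>i. complex_of_real (r i))"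
  unfolding dmat_adj by simp

lemma fid_bound_gen:
  assumes r1: "nonneg_op \<rho>1" "\<rho>1 \<in> carrier_mat n n" and r2: "nonneg_op \<rho>2" "\<rho>2 \<in> carrier_mat n n"
    and E1: "nonneg_op E1" "E1 \<in> carrier_mat n n" and E2: "nonneg_op E2" "E2 \<in> carrier_mat n n"
    and E12: "E1 + E2 = 1\<^sub>m n"
  shows "fidelity \<rho>1 \<rho>2 \<le> sqrt (Re (cmat_trace (E1 * \<rho>1))) * sqrt (Re (cmat_trace (E1 * \<rho>2)))
                          + sqrt (Re (cmat_trace (E2 * \<rho>1))) * sqrt (Re (cmat_trace (E2 * \<rho>2)))"
proof -
  define S where "S = op_sqrt \<rho>1"
  define T where "T = op_sqrt \<rho>2"
  note Sp = op_sqrt[OF r1, folded S_def] and Tp = op_sqrt[OF r2, folded T_def]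
  have Sc: "S \<in> carrier_mat n n" and hS: "mat_adjoint S = S" using Sp nonneg_opD(1)[OF Sp(1,2)] by auto
  have Tc: "T \<in> carrier_mat n n" and hT: "mat_adjoint T = T" using Tp nonneg_opD(1)[OF Tp(1,2)] by auto
  define M where "M = S * T"
  have Mc: "M \<in> carrier_mat n n" unfolding M_def using Sc Tc by auto
  define G where "G = mat_adjoint M * M"
  note Gp = gram_psd[OF Mc, folded G_def]
  define P where "P = op_sqrt G"
  note Pp = op_sqrt[OF Gp, folded P_def]
  have fid: "fidelity \<rho>1 \<rho>2 = Re (cmat_trace P)"
    unfolding fidelity_def trace_norm_def P_def G_def M_def S_def T_def ..
  obtain V r where Vr: "unitary V n" "\<forall>i<n. r i \<ge> 0" "P = V * dmat n (\<lambda>i. of_real (r i)) * mat_adjoint V"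
    using psd_spectral_real[OF Pp(1,2)] by blast
  define D where "D = dmat n (\<lambda>i. of_real (r i))"
  have Dc: "D \<in> carrier_mat n n" and hD: "mat_adjoint D = D" unfolding D_def using dmat_real_adj by auto
  have Vc: "V \<in> carrier_mat n n" and aV: "mat_adjoint V \<in> carrier_mat n n" and VV: "mat_adjoint V * V = 1\<^sub>m n"
    using Vr(1) unfolding unitary_def by auto
  have canc: "mat_adjoint V * (V * Y) = Y" "V * (mat_adjoint V * Y) = Y" if "Y \<in> carrier_mat n n" for Y
    using unitary_cancel[OF Vr(1) that] by auto
  have trP: "cmat_trace P = (\<Sum>i<n. of_real (r i))"
    unfolding Vr(3) trace_unitary_conj[OF Vr(1) dmat_carrier] trace_dmat ..
  define X where "X = M * V"
  have Xc: "X \<in> carrier_mat n n" unfolding X_def using Mc Vc by auto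
  have XX: "mat_adjoint X * X = D * D"
  proof -
    have "mat_adjoint X * X = mat_adjoint V * (G * V)"
      unfolding X_def G_def adj_mult[OF Mc Vc] using Mc Vc aV
      by (simp add: assoc_mult_mat[of _ n n _ n _ n] sqm)
    also have "G = P * P" using Pp by simp
    also have "mat_adjoint V * (P * P * V) = D * D"
      unfolding Vr(3) D_def[symmetric] using Vc aV Dc canc VV
      by (simp add: assoc_mult_mat[of _ n n _ n _ n] sqm)
    finally show ?thesis .
  qed
  define q where "q = (\<lambda>i. if r i = 0 then 0 else 1 / r i)"
  define del where "del = dmat n (\<lambda>i. of_real (q i))"
  have delc: "del \<in> carrier_mat n n" and hdel: "mat_adjoint del = del" unfolding del_def using dmat_real_adj by auto
  define Phi where "Phi = X * del"
  have Phic: "Phi \<in> carrier_mat n n" unfolding Phi_def using Xc delc by auto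
  have aX: "mat_adjoint X \<in> carrier_mat n n" using Xc by auto
  have aPhi: "mat_adjoint Phi = del * mat_adjoint X" unfolding Phi_def adj_mult[OF Xc delc] hdel ..
  have aPhic: "mat_adjoint Phi \<in> carrier_mat n n" using Phic by auto
  have PX: "mat_adjoint Phi * X = D"
  proof -
    have "mat_adjoint Phi * X = del * (mat_adjoint X * X)" unfolding aPhi using delc aX Xc
      by (simp add: assoc_mult_mat[of _ n n _ n _ n] sqm)
    also have "\<dots> = D" unfolding XX del_def D_def dmat_mult
    proof (rule dmat_cong)
      fix i assume "i < n"
      show "complex_of_real (q i) * (complex_of_real (r i) * complex_of_real (r i)) = complex_of_real (r i)"
        unfolding q_def by (cases "r i = 0", auto)
    qed
    finally show ?thesis .
  qed
  define dl where "dl = dmat n (\<lambda>i. of_real (if r i = 0 then 0 else 1))"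
  have PP: "mat_adjoint Phi * Phi = dl"
  proof -
    have "mat_adjoint Phi * Phi = (mat_adjoint Phi * X) * del" unfolding Phi_def using aPhic Xc delc
      by (simp add: assoc_mult_mat[of _ n n _ n _ n] sqm)
    also have "\<dots> = dl" unfolding PX D_def del_def dl_def dmat_mult
    proof (rule dmat_cong)
      fix i assume "i < n"
      show "complex_of_real (r i) * complex_of_real (q i) = complex_of_real (if r i = 0 then 0 else 1)"
        unfolding q_def by (cases "r i = 0", auto)
    qed
    finally show ?thesis .
  qed
  have Phidl: "Phi * dl = Phi"
  proof -
    have "Phi * dl = X * (del * dl)" unfolding Phi_def using Xc delc dl_def
      by (simp add: assoc_mult_mat[of _ n n _ n _ n] sqm)
    also have "del * dl = del" unfolding del_def dl_def dmat_mult
      by (rule dmat_cong, auto simp: q_def)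
    finally show ?thesis unfolding Phi_def .
  qed
  define Pi where "Pi = Phi * mat_adjoint Phi"
  have Pic: "Pi \<in> carrier_mat n n" unfolding Pi_def using Phic aPhic by auto
  have PiPi: "Pi * Pi = Pi"
  proof -
    have "Pi * Pi = (Phi * (mat_adjoint Phi * Phi)) * mat_adjoint Phi" unfolding Pi_def using Phic aPhic
      by (simp add: assoc_mult_mat[of _ n n _ n _ n] sqm)
    thus ?thesis unfolding PP Phidl Pi_def .
  qed
  have hPi: "mat_adjoint Pi = Pi" unfolding Pi_def using adj_mult[OF Phic aPhic] by simp
  define I where "I = (1\<^sub>m n :: complex mat)"
  have Ic: "I \<in> carrier_mat n n" unfolding I_def by simp
  have IPc: "I - Pi \<in> carrier_mat n n" using Pic by (rule minus_carrier_mat)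
  have IPIP: "mat_adjoint (I - Pi) * (I - Pi) = I - Pi"
  proof -
    have "mat_adjoint (I - Pi) = mat_adjoint I - mat_adjoint Pi" by (rule adj_minus[OF Ic Pic])
    also have "\<dots> = I - Pi" unfolding hPi I_def by simp
    finally have "mat_adjoint (I - Pi) = I - Pi" .
    moreover have "(I - Pi) * (I - Pi) = I - Pi"
    proof -
      have "(I - Pi) * (I - Pi) = (I - Pi) * I - (I - Pi) * Pi" using IPc Ic Pic by (rule mult_minus_distrib_mat)
      also have "(I - Pi) * Pi = I * Pi - Pi * Pi" by (rule minus_mult_distrib_mat[OF Ic Pic Pic])
      also have "I * Pi - Pi * Pi = 0\<^sub>m n n" unfolding PiPi I_def using Pic by simp
      also have "(I - Pi) * I = I - Pi" unfolding I_def by (rule right_mult_one_mat[OF IPc[unfolded I_def]])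
      also have "I - Pi - 0\<^sub>m n n = I - Pi" using Pic unfolding I_def by (intro eq_matI, auto)
      finally show ?thesis .
    qed
    ultimately show ?thesis by simp
  qed
  have IPpsd: "nonneg_op (I - Pi)" using gram_psd(1)[OF IPc] IPIP by simp
  have aS: "mat_adjoint S \<in> carrier_mat n n" and aT: "mat_adjoint T \<in> carrier_mat n n" using Sc Tc by auto
  have key: "Re (cmat_trace (mat_adjoint Phi * (S * (E * (T * V))))) \<le>
      sqrt (Re (cmat_trace (E * \<rho>1))) * sqrt (Re (cmat_trace (E * \<rho>2)))"
    if E: "nonneg_op E" "E \<in> carrier_mat n n" for E
  proof -
    define R where "R = op_sqrt E"
    note Rp = op_sqrt[OF E, folded R_def]
    have Rc: "R \<in> carrier_mat n n" and hR: "mat_adjoint R = R" using Rp nonneg_opD(1)[OF Rp(1,2)] by auto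
    have RR: "R * (R * Y) = E * Y" if "Y \<in> carrier_mat n n" for Y
      using assoc_mult_mat[OF Rc Rc that] Rp(3) by simp
    define A where "A = R * S * Phi"
    define B where "B = R * T * V"
    have Ac: "A \<in> carrier_mat n n" and Bc: "B \<in> carrier_mat n n" unfolding A_def B_def using Rc Sc Tc Phic Vc by auto
    have aA: "mat_adjoint A = mat_adjoint Phi * (S * R)"
      unfolding A_def using adj_mult[of "R * S" n n Phi n] adj_mult[OF Rc Sc] Rc Sc Phic hR hS by simp
    have aB: "mat_adjoint B = mat_adjoint V * (T * R)"
      unfolding B_def using adj_mult[of "R * T" n n V n] adj_mult[OF Rc Tc] Rc Tc Vc hR hT by simp
    have ESTV: "E * (T * V) \<in> carrier_mat n n" using E(2) Tc Vc by auto
    have AB: "mat_adjoint A * B = mat_adjoint Phi * (S * (E * (T * V)))"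
      unfolding aA B_def using aPhic Sc Rc Tc Vc RR[of "T * V"]
      by (simp add: assoc_mult_mat[of _ n n _ n _ n] sqm)
    have BB: "Re (cmat_trace (mat_adjoint B * B)) = Re (cmat_trace (E * \<rho>2))"
    proof -
      have "mat_adjoint B * B = mat_adjoint V * (T * E * T) * mat_adjoint (mat_adjoint V)"
        apply (subst aB) unfolding B_def using aV Tc Rc Vc E(2) RR[of "T * V"]
        by (simp add: assoc_mult_mat[of _ n n _ n _ n] sqm)
      hence "cmat_trace (mat_adjoint B * B) = cmat_trace (T * E * T)"
        using trace_unitary_conj[OF unitary_adj[OF Vr(1)], of "T * E * T"] Tc E(2) by (simp add: sqm)
      also have "\<dots> = cmat_trace (E * (T * T))"
        using trace_comm[of T n n "E * T"] Tc E(2) by (simp add: assoc_mult_mat[of _ n n _ n _ n] sqm)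
      finally show ?thesis using Tp(3) by simp
    qed
    have AA: "Re (cmat_trace (mat_adjoint A * A)) \<le> Re (cmat_trace (E * \<rho>1))"
    proof -
      define K where "K = mat_adjoint (R * S) * (R * S)"
      have RSc: "R * S \<in> carrier_mat n n" using Rc Sc by auto
      note Kp = gram_psd[OF RSc, folded K_def]
      have K: "K = S * (E * S)" unfolding K_def adj_mult[OF Rc Sc] hR hS using Sc Rc RR[of S]
        by (simp add: assoc_mult_mat[of _ n n _ n _ n] sqm)
      have "mat_adjoint A * A = mat_adjoint Phi * (K * Phi)"
        apply (subst aA) unfolding A_def K using aPhic Sc Rc Phic RR[of "S * Phi"] E(2)
        by (simp add: assoc_mult_mat[of _ n n _ n _ n] sqm)
      hence "cmat_trace (mat_adjoint A * A) = cmat_trace (K * (Phi * mat_adjoint Phi))"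
        using trace_comm[of "mat_adjoint Phi" n n "K * Phi"] aPhic Kp(2) Phic by (simp add: sqm)
      also have "\<dots> = cmat_trace (K * Pi)" unfolding Pi_def ..
      finally have t1: "cmat_trace (mat_adjoint A * A) = cmat_trace (K * Pi)" .
      have "K * (I - Pi) = K * I - K * Pi" by (rule mult_minus_distrib_mat[OF Kp(2) Ic Pic])
      also have "K * I = K" unfolding I_def using Kp(2) by simp
      finally have "cmat_trace (K * (I - Pi)) = cmat_trace K - cmat_trace (K * Pi)"
        using trace_minus[of K n "K * Pi"] Kp(2) Pic by simp
      moreover have "Re (cmat_trace (K * (I - Pi))) \<ge> 0" by (rule trace_psd_prod[OF Kp IPpsd IPc])
      ultimately have "Re (cmat_trace (K * Pi)) \<le> Re (cmat_trace K)" by simp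
      also have "cmat_trace K = cmat_trace (E * (S * S))"
        unfolding K using trace_comm[of S n n "E * S"] Sc E(2) by (simp add: assoc_mult_mat[of _ n n _ n _ n] sqm)
      finally show ?thesis using t1 Sp(3) by simp
    qed
    have B0: "Re (cmat_trace (mat_adjoint B * B)) \<ge> 0" using trace_psd_nonneg[OF gram_psd[OF Bc]] .
    have "Re (cmat_trace (mat_adjoint A * B)) \<le> sqrt (Re (cmat_trace (mat_adjoint A * A))) * sqrt (Re (cmat_trace (mat_adjoint B * B)))"
      by (rule frob_CS[OF Ac Bc])
    also have "\<dots> \<le> sqrt (Re (cmat_trace (E * \<rho>1))) * sqrt (Re (cmat_trace (E * \<rho>2)))"
      unfolding BB[symmetric] using AA B0 by (intro mult_right_mono real_sqrt_le_mono, auto)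
    finally show ?thesis unfolding AB .
  qed
  have TV: "T * V \<in> carrier_mat n n" using Tc Vc by auto
  have "mat_adjoint Phi * X = mat_adjoint Phi * (S * ((E1 + E2) * (T * V)))"
    unfolding E12 X_def M_def using Sc Tc Vc aPhic by (simp add: assoc_mult_mat[of _ n n _ n _ n] sqm)
  also have "(E1 + E2) * (T * V) = E1 * (T * V) + E2 * (T * V)" by (rule add_mult_distrib_mat[OF E1(2) E2(2) TV])
  also have "S * (E1 * (T * V) + E2 * (T * V)) = S * (E1 * (T * V)) + S * (E2 * (T * V))"
    by (rule mult_add_distrib_mat[OF Sc], use E1(2) E2(2) TV in auto)
  also have "mat_adjoint Phi * (S * (E1 * (T * V)) + S * (E2 * (T * V))) = 
     mat_adjoint Phi * (S * (E1 * (T * V))) + mat_adjoint Phi * (S * (E2 * (T * V)))"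
    by (rule mult_add_distrib_mat[OF aPhic], use E1(2) E2(2) TV Sc in auto)
  finally have split: "mat_adjoint Phi * X = mat_adjoint Phi * (S * (E1 * (T * V))) + mat_adjoint Phi * (S * (E2 * (T * V)))" .
  have "fidelity \<rho>1 \<rho>2 = Re (cmat_trace (mat_adjoint Phi * X))"
    unfolding fid PX trP D_def trace_dmat ..
  also have "\<dots> = Re (cmat_trace (mat_adjoint Phi * (S * (E1 * (T * V))))) + Re (cmat_trace (mat_adjoint Phi * (S * (E2 * (T * V)))))"
    unfolding split using trace_add[of "mat_adjoint Phi * (S * (E1 * (T * V)))" n "mat_adjoint Phi * (S * (E2 * (T * V)))"]
      aPhic Sc E1(2) E2(2) TV by (simp add: sqm)
  also have "\<dots> \<le> sqrt (Re (cmat_trace (E1 * \<rho>1))) * sqrt (Re (cmat_trace (E1 * \<rho>2)))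
                          + sqrt (Re (cmat_trace (E2 * \<rho>1))) * sqrt (Re (cmat_trace (E2 * \<rho>2)))"
    using key[OF E1] key[OF E2] by simp
  finally show ?thesis .
qed



lemma bhatt_bound: fixes p q :: real
  assumes p: "0 \<le> p" "p \<le> 1" and q: "0 \<le> q" "q \<le> 1"
  shows "(sqrt (q * p) + sqrt ((1 - q) * (1 - p)))\<^sup>2 \<le> 1 - (p - q)\<^sup>2"
proof -
  define u where "u = sqrt (p * (1 - p))"
  define w where "w = sqrt (q * (1 - q))"
  have u2: "u\<^sup>2 = p * (1 - p)" unfolding u_def using p by simp
  have w2: "w\<^sup>2 = q * (1 - q)" unfolding w_def using q by simp
  have sq: "sqrt (q * p) * sqrt ((1 - q) * (1 - p)) = u * w"
  proof -
    have "sqrt (q * p) * sqrt ((1 - q) * (1 - p)) = sqrt ((q * p) * ((1 - q) * (1 - p)))" by (simp only: real_sqrt_mult)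
    also have "(q * p) * ((1 - q) * (1 - p)) = (p * (1 - p)) * (q * (1 - q))" by (simp add: mult_ac)
    also have "sqrt \<dots> = u * w" unfolding u_def w_def by (simp only: real_sqrt_mult)
    finally show ?thesis .
  qed
  have a2: "(sqrt (q * p))\<^sup>2 = q * p" using p q by simp
  have b2: "(sqrt ((1 - q) * (1 - p)))\<^sup>2 = (1 - q) * (1 - p)" using p q by simp
  have "(sqrt (q * p) + sqrt ((1 - q) * (1 - p)))\<^sup>2 = q * p + (1 - q) * (1 - p) + 2 * (u * w)"
    unfolding power2_sum a2 b2 mult.assoc sq by simp
  also have "\<dots> \<le> 1 - (p - q)\<^sup>2"
  proof -
    have "0 \<le> (u - w)\<^sup>2" by simp
    hence "2 * (u * w) \<le> u\<^sup>2 + w\<^sup>2" by (simp add: power2_diff)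
    thus ?thesis unfolding u2 w2 by (simp add: power2_diff algebra_simps power2_eq_square)
  qed
  finally show ?thesis .
qed

lemma classical_step: fixes p q1 q2 F e :: real
  assumes p: "0 \<le> p" "p \<le> 1" and q: "0 \<le> q1" "0 \<le> q2" "q1 + q2 \<le> 1"
    and F: "F \<le> sqrt (q1 * p) + sqrt (q2 * (1 - p))" and F0: "0 \<le> F" and Fe: "1 - F\<^sup>2 \<le> e\<^sup>2" and e: "0 \<le> e"
  shows "p - q1 \<le> e"
proof -
  have s: "sqrt (q2 * (1 - p)) \<le> sqrt ((1 - q1) * (1 - p))"
    using q p by (intro real_sqrt_le_mono mult_right_mono, auto)
  have F': "F \<le> sqrt (q1 * p) + sqrt ((1 - q1) * (1 - p))" using F s by linarith
  have "F\<^sup>2 \<le> (sqrt (q1 * p) + sqrt ((1 - q1) * (1 - p)))\<^sup>2"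
    using F' F0 by (intro power_mono, auto)
  also have "\<dots> \<le> 1 - (p - q1)\<^sup>2" using bhatt_bound[OF p, of q1] q by simp
  finally have "(p - q1)\<^sup>2 \<le> e\<^sup>2" using Fe by simp
  thus ?thesis using e by (metis abs_le_square_iff abs_le_D1 abs_of_nonneg)
qed

lemma nonneg_zero: "nonneg_op (0\<^sub>m n n :: complex mat)"
proof (rule nonneg_opI[of _ n])
  fix v :: "complex vec" assume v: "v \<in> carrier_vec n"
  have "0\<^sub>m n n *\<^sub>v v = 0\<^sub>v n" using v by (intro eq_vecI, auto)
  thus "Re ((0\<^sub>m n n *\<^sub>v v) \<bullet>c v) \<ge> 0" using v by simp
qed auto

lemma nonneg_one: "nonneg_op (1\<^sub>m n :: complex mat)"
proof (rule nonneg_opI[of _ n])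
  fix v :: "complex vec" assume v: "v \<in> carrier_vec n"
  show "Re ((1\<^sub>m n *\<^sub>v v) \<bullet>c v) \<ge> 0" using cscalar_self_real[OF v] v by simp
qed auto

lemma fidelity_self: assumes r: "density_op \<rho>" "\<rho> \<in> carrier_mat n n"
  shows "fidelity \<rho> \<rho> = 1"
proof -
  have r1: "nonneg_op \<rho>" and tr: "cmat_trace \<rho> = 1" using r unfolding density_op_def by auto
  note Sp = op_sqrt[OF r1 r(2)]
  have h: "mat_adjoint \<rho> = \<rho>" using nonneg_opD(1)[OF r1 r(2)] .
  have "op_sqrt (mat_adjoint \<rho> * \<rho>) = \<rho>" unfolding h by (rule op_sqrt_eq[OF r1 r(2) refl])
  thus ?thesis unfolding fidelity_def trace_norm_def Sp(3) using tr by simp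
qed

lemma fidelity_nonneg: assumes r1: "nonneg_op \<rho>1" "\<rho>1 \<in> carrier_mat n n" and r2: "nonneg_op \<rho>2" "\<rho>2 \<in> carrier_mat n n"
  shows "fidelity \<rho>1 \<rho>2 \<ge> 0"
proof -
  have Mc: "op_sqrt \<rho>1 * op_sqrt \<rho>2 \<in> carrier_mat n n" using op_sqrt(2)[OF r1] op_sqrt(2)[OF r2] by auto
  note G = gram_psd[OF Mc]
  show ?thesis unfolding fidelity_def trace_norm_def
    by (rule trace_psd_nonneg[OF op_sqrt(1,2)[OF G]])
qed

lemma trace_one_minus: assumes "Q \<in> carrier_mat n n" "A \<in> carrier_mat n n"
  shows "cmat_trace ((1\<^sub>m n - Q) * A) = cmat_trace A - cmat_trace (Q * A)"
proof -
  have "(1\<^sub>m n - Q) * A = 1\<^sub>m n * A - Q * A" by (rule minus_mult_distrib_mat[OF one_carrier_mat assms(1,2)])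
  also have "1\<^sub>m n * A = A" using assms(2) by simp
  finally show ?thesis using trace_minus[of A n "Q * A"] assms by simp
qed

lemma one_minus_add: assumes "Q \<in> carrier_mat n n" shows "Q + (1\<^sub>m n - Q) = (1\<^sub>m n :: complex mat)"
  by (rule eq_matI, insert assms, auto)

lemma fid_sq_le_trace: assumes r1: "nonneg_op \<rho>1" "\<rho>1 \<in> carrier_mat n n" and r: "density_op \<rho>" "\<rho> \<in> carrier_mat n n"
  shows "(fidelity \<rho>1 \<rho>)\<^sup>2 \<le> Re (cmat_trace \<rho>1)"
proof -
  have r2: "nonneg_op \<rho>" and tr: "cmat_trace \<rho> = 1" using r unfolding density_op_def by auto
  have "fidelity \<rho>1 \<rho> \<le> sqrt (Re (cmat_trace (1\<^sub>m n * \<rho>1))) * sqrt (Re (cmat_trace (1\<^sub>m n * \<rho>)))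
      + sqrt (Re (cmat_trace (0\<^sub>m n n * \<rho>1))) * sqrt (Re (cmat_trace (0\<^sub>m n n * \<rho>)))"
    by (rule fid_bound_gen[OF r1 r2 r(2) nonneg_one _ nonneg_zero], auto)
  also have "\<dots> = sqrt (Re (cmat_trace \<rho>1))" using r1(2) r(2) tr by simp
  finally have F: "fidelity \<rho>1 \<rho> \<le> sqrt (Re (cmat_trace \<rho>1))" .
  have "fidelity \<rho>1 \<rho> \<ge> 0" by (rule fidelity_nonneg[OF r1 r2 r(2)])
  hence "(fidelity \<rho>1 \<rho>)\<^sup>2 \<le> (sqrt (Re (cmat_trace \<rho>1)))\<^sup>2" using F by (intro power_mono, auto)
  also have "\<dots> = Re (cmat_trace \<rho>1)" using trace_psd_nonneg[OF r1] by simp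
  finally show ?thesis .
qed

lemma meas_close: assumes r1: "nonneg_op \<rho>1" "\<rho>1 \<in> carrier_mat n n" "Re (cmat_trace \<rho>1) \<le> 1"
  and F: "1 - (fidelity \<rho>1 \<rho>)\<^sup>2 \<le> e\<^sup>2" and e: "0 \<le> e"
  and r: "density_op \<rho>" "\<rho> \<in> carrier_mat n n"
  and Q: "nonneg_op Q" "Q \<in> carrier_mat n n" "nonneg_op (1\<^sub>m n - Q)"
  shows "Re (cmat_trace (Q * \<rho>)) - e \<le> Re (cmat_trace (Q * \<rho>1))"
proof -
  have r2: "nonneg_op \<rho>" and tr: "cmat_trace \<rho> = 1" using r unfolding density_op_def by auto
  have IQ: "1\<^sub>m n - Q \<in> carrier_mat n n" using Q(2) by (rule minus_carrier_mat)
  define p where "p = Re (cmat_trace (Q * \<rho>))"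
  define q1 where "q1 = Re (cmat_trace (Q * \<rho>1))"
  define q2 where "q2 = Re (cmat_trace ((1\<^sub>m n - Q) * \<rho>1))"
  have p2: "Re (cmat_trace ((1\<^sub>m n - Q) * \<rho>)) = 1 - p" unfolding p_def trace_one_minus[OF Q(2) r(2)] tr by simp
  have q12: "q1 + q2 = Re (cmat_trace \<rho>1)" unfolding q1_def q2_def trace_one_minus[OF Q(2) r1(2)] by simp
  have p0: "0 \<le> p" unfolding p_def by (rule trace_psd_prod[OF Q(1,2) r2 r(2)])
  have p1: "0 \<le> 1 - p" unfolding p2[symmetric] by (rule trace_psd_prod[OF Q(3) IQ r2 r(2)])
  have q10: "0 \<le> q1" unfolding q1_def by (rule trace_psd_prod[OF Q(1,2) r1(1,2)])
  have q20: "0 \<le> q2" unfolding q2_def by (rule trace_psd_prod[OF Q(3) IQ r1(1,2)])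
  have "fidelity \<rho>1 \<rho> \<le> sqrt q1 * sqrt p + sqrt q2 * sqrt (1 - p)"
    using fid_bound_gen[OF r1(1,2) r2 r(2) Q(1,2) Q(3) IQ one_minus_add[OF Q(2)]]
    unfolding p2 unfolding p_def q1_def q2_def .
  hence Fb: "fidelity \<rho>1 \<rho> \<le> sqrt (q1 * p) + sqrt (q2 * (1 - p))" by (simp add: real_sqrt_mult)
  have F0: "fidelity \<rho>1 \<rho> \<ge> 0" by (rule fidelity_nonneg[OF r1(1,2) r2 r(2)])
  have "p - q1 \<le> e"
    by (rule classical_step[OF p0 _ q10 q20 _ Fb F0 F e], insert p1 q12 r1(3), auto)
  thus ?thesis unfolding p_def q1_def by simp
qed

theorem lemmaA6:
  fixes n :: nat and \<rho> \<sigma> :: "complex mat" and \<epsilon> \<epsilon>' :: real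
  assumes "\<rho> \<in> carrier_mat n n" and "\<sigma> \<in> carrier_mat n n"
    and "density_op \<rho>" and "nonneg_op \<sigma>"
    and "\<epsilon> \<le> 1" and "\<epsilon>' < \<epsilon>" and "0 \<le> \<epsilon>'"
  shows "D_H \<epsilon> \<rho> \<sigma> \<le> D_max \<epsilon>' \<rho> \<sigma> + ereal (log 2 (\<epsilon> / (\<epsilon> - \<epsilon>')))"
proof -
  note rc = assms(1) and sc = assms(2) and dens = assms(3) and sig = assms(4)
  have r2: "nonneg_op \<rho>" and tr: "cmat_trace \<rho> = 1" using dens unfolding density_op_def by auto
  have dr: "dim_row \<rho> = n" using rc by auto
  have eps: "0 < \<epsilon>" using assms(6,7) by simp
  have ee: "0 < \<epsilon> - \<epsilon>'" using assms(6) by simp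
  define Hs where "Hs = {Re (cmat_trace (Q * \<sigma>)) / \<epsilon> | Q.
      Q \<in> carrier_mat n n \<and> nonneg_op Q \<and> op_le Q (1\<^sub>m n) \<and> Re (cmat_trace (Q * \<rho>)) \<ge> \<epsilon>}"
  have hdef: "hyp_test_val \<epsilon> \<rho> \<sigma> = Inf Hs" unfolding hyp_test_val_def Hs_def dr ..
  define Ms where "Ms = {ereal \<mu> | \<mu> \<rho>'.
      \<rho>' \<in> carrier_mat n n \<and> nonneg_op \<rho>' \<and> Re (cmat_trace \<rho>') \<le> 1 \<and>
      op_le (complex_of_real \<mu> \<cdot>\<^sub>m \<rho>') \<sigma> \<and> 1 - (fidelity \<rho>' \<rho>)\<^sup>2 \<le> \<epsilon>'\<^sup>2}"
  have mdef: "max_val \<epsilon>' \<rho> \<sigma> = Sup Ms" unfolding max_val_def Ms_def dr ..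
  have trQs: "Re (cmat_trace (Q * \<sigma>)) \<ge> 0" if "nonneg_op Q" "Q \<in> carrier_mat n n" for Q
    by (rule trace_psd_prod[OF that sig sc])
  have feas: "\<mu> * (\<epsilon> - \<epsilon>') \<le> Re (cmat_trace (Q * \<sigma>))"
    if r1: "\<rho>' \<in> carrier_mat n n" "nonneg_op \<rho>'" "Re (cmat_trace \<rho>') \<le> 1"
      "op_le (complex_of_real \<mu> \<cdot>\<^sub>m \<rho>') \<sigma>" "1 - (fidelity \<rho>' \<rho>)\<^sup>2 \<le> \<epsilon>'\<^sup>2"
    and Q: "Q \<in> carrier_mat n n" "nonneg_op Q" "op_le Q (1\<^sub>m n)" "Re (cmat_trace (Q * \<rho>)) \<ge> \<epsilon>"
    for \<mu> \<rho>' Q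
  proof (cases "\<mu> \<le> 0")
    case True
    thus ?thesis using trQs[OF Q(2,1)] ee by (meson mult_nonpos_nonneg order.trans less_imp_le)
  next
    case False
    have IQ: "nonneg_op (1\<^sub>m n - Q)" using Q(3) unfolding op_le_def by simp
    have cl: "Re (cmat_trace (Q * \<rho>)) - \<epsilon>' \<le> Re (cmat_trace (Q * \<rho>'))"
      by (rule meas_close[OF r1(2,1,3) r1(5) assms(7) dens rc Q(2,1) IQ])
    have D: "nonneg_op (\<sigma> - complex_of_real \<mu> \<cdot>\<^sub>m \<rho>')" using r1(4) unfolding op_le_def by simp
    have Dc: "\<sigma> - complex_of_real \<mu> \<cdot>\<^sub>m \<rho>' \<in> carrier_mat n n" using r1(1) by (intro minus_carrier_mat, simp)
    have "Q * (\<sigma> - complex_of_real \<mu> \<cdot>\<^sub>m \<rho>') = Q * \<sigma> - Q * (complex_of_real \<mu> \<cdot>\<^sub>m \<rho>')"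
      by (rule mult_minus_distrib_mat[OF Q(1) sc], use r1(1) in simp)
    also have "Q * (complex_of_real \<mu> \<cdot>\<^sub>m \<rho>') = complex_of_real \<mu> \<cdot>\<^sub>m (Q * \<rho>')"
      by (rule mult_smult_distrib[OF Q(1) r1(1)])
    finally have "cmat_trace (Q * (\<sigma> - complex_of_real \<mu> \<cdot>\<^sub>m \<rho>')) = cmat_trace (Q * \<sigma>) - complex_of_real \<mu> * cmat_trace (Q * \<rho>')"
      using trace_minus[of "Q * \<sigma>" n "complex_of_real \<mu> \<cdot>\<^sub>m (Q * \<rho>')"] trace_smult[of "Q * \<rho>'" n] Q(1) sc r1(1) by simp
    moreover have "Re (cmat_trace (Q * (\<sigma> - complex_of_real \<mu> \<cdot>\<^sub>m \<rho>'))) \<ge> 0" by (rule trace_psd_prod[OF Q(2,1) D Dc])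
    ultimately have "\<mu> * Re (cmat_trace (Q * \<rho>')) \<le> Re (cmat_trace (Q * \<sigma>))" by simp
    moreover have "\<mu> * (\<epsilon> - \<epsilon>') \<le> \<mu> * Re (cmat_trace (Q * \<rho>'))"
      using cl Q(4) False by (intro mult_left_mono, auto)
    ultimately show ?thesis by linarith
  qed
  define c where "c = 1 - \<epsilon>'\<^sup>2"
  have c0: "c > 0" unfolding c_def using assms(5,6,7)
    by (smt (verit, ccfv_SIG) power_strict_mono zero_less_numeral one_power2 power2_less_eq_zero_iff)
  have trs0: "Re (cmat_trace \<sigma>) \<ge> 0" by (rule trace_psd_nonneg[OF sig sc])
  have mub: "\<mu> \<le> Re (cmat_trace \<sigma>) / c"
    if r1: "\<rho>' \<in> carrier_mat n n" "nonneg_op \<rho>'" 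
      "op_le (complex_of_real \<mu> \<cdot>\<^sub>m \<rho>') \<sigma>" "1 - (fidelity \<rho>' \<rho>)\<^sup>2 \<le> \<epsilon>'\<^sup>2"
    for \<mu> \<rho>'
  proof (cases "\<mu> \<le> 0")
    case True thus ?thesis using trs0 c0 by (meson divide_nonneg_pos order.trans)
  next
    case False
    have "c \<le> (fidelity \<rho>' \<rho>)\<^sup>2" using r1(4) unfolding c_def by simp
    also have "\<dots> \<le> Re (cmat_trace \<rho>')" by (rule fid_sq_le_trace[OF r1(2,1) dens rc])
    finally have ct: "c \<le> Re (cmat_trace \<rho>')" .
    have D: "nonneg_op (\<sigma> - complex_of_real \<mu> \<cdot>\<^sub>m \<rho>')" using r1(3) unfolding op_le_def by simp
    have Dc: "\<sigma> - complex_of_real \<mu> \<cdot>\<^sub>m \<rho>' \<in> carrier_mat n n" using r1(1) by (intro minus_carrier_mat, simp)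
    have "cmat_trace (\<sigma> - complex_of_real \<mu> \<cdot>\<^sub>m \<rho>') = cmat_trace \<sigma> - complex_of_real \<mu> * cmat_trace \<rho>'"
      using trace_minus[of \<sigma> n "complex_of_real \<mu> \<cdot>\<^sub>m \<rho>'"] trace_smult[of \<rho>' n] sc r1(1) by simp
    moreover have "Re (cmat_trace (\<sigma> - complex_of_real \<mu> \<cdot>\<^sub>m \<rho>')) \<ge> 0" by (rule trace_psd_nonneg[OF D Dc])
    ultimately have "\<mu> * Re (cmat_trace \<rho>') \<le> Re (cmat_trace \<sigma>)" by simp
    moreover have "\<mu> * c \<le> \<mu> * Re (cmat_trace \<rho>')" using ct False by (intro mult_left_mono, auto)
    ultimately have "\<mu> * c \<le> Re (cmat_trace \<sigma>)" by linarith
    thus ?thesis using c0 by (simp add: field_simps)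
  qed
  have rho_feas: "op_le (complex_of_real 0 \<cdot>\<^sub>m \<rho>) \<sigma>"
  proof -
    have "\<sigma> - complex_of_real 0 \<cdot>\<^sub>m \<rho> = \<sigma>" using sc rc by (intro eq_matI, auto)
    thus ?thesis unfolding op_le_def using sig sc rc by auto
  qed
  have "ereal 0 \<in> Ms" unfolding Ms_def
    using rc r2 tr rho_feas fidelity_self[OF dens rc] by (intro CollectI exI[of _ 0] exI[of _ \<rho>], auto)
  hence m0: "Sup Ms \<ge> 0" by (metis Sup_upper zero_ereal_def)
  have mfin: "Sup Ms \<le> ereal (Re (cmat_trace \<sigma>) / c)"
    by (rule Sup_least, unfold Ms_def, auto intro!: mub)
  have one_feas: "op_le (1\<^sub>m n) (1\<^sub>m n)"
  proof -
    have z: "1\<^sub>m n - 1\<^sub>m n = (0\<^sub>m n n :: complex mat)" by simp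
    show ?thesis unfolding op_le_def z using nonneg_zero[of n] by simp
  qed
  have "Re (cmat_trace (1\<^sub>m n * \<sigma>)) / \<epsilon> \<in> Hs" unfolding Hs_def
    using nonneg_one one_feas tr assms(5) rc by (intro CollectI exI[of _ "1\<^sub>m n"], auto)
  hence Hne: "Hs \<noteq> {}" by auto
  have Hlow: "\<mu> * (\<epsilon> - \<epsilon>') / \<epsilon> \<le> Inf Hs"
    if r1: "\<rho>' \<in> carrier_mat n n" "nonneg_op \<rho>'" "Re (cmat_trace \<rho>') \<le> 1"
      "op_le (complex_of_real \<mu> \<cdot>\<^sub>m \<rho>') \<sigma>" "1 - (fidelity \<rho>' \<rho>)\<^sup>2 \<le> \<epsilon>'\<^sup>2"
    for \<mu> \<rho>'
  proof (rule cInf_greatest[OF Hne])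
    fix x assume "x \<in> Hs"
    then obtain Q where Q: "x = Re (cmat_trace (Q * \<sigma>)) / \<epsilon>" "Q \<in> carrier_mat n n" "nonneg_op Q"
      "op_le Q (1\<^sub>m n)" "Re (cmat_trace (Q * \<rho>)) \<ge> \<epsilon>" unfolding Hs_def by blast
    show "\<mu> * (\<epsilon> - \<epsilon>') / \<epsilon> \<le> x" unfolding Q(1) using feas[OF r1 Q(2-5)] eps
      by (simp add: divide_right_mono)
  qed
  show ?thesis
  proof (cases "Sup Ms = 0")
    case True
    hence "D_max \<epsilon>' \<rho> \<sigma> = \<infinity>" unfolding D_max_def mdef by simp
    thus ?thesis by simp
  next
    case False
    obtain mr where mr: "Sup Ms = ereal mr" using m0 mfin
      by (cases "Sup Ms", auto)
    have mr0: "mr > 0" using m0 False mr by simp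
    have Dm: "D_max \<epsilon>' \<rho> \<sigma> = ereal (- log 2 mr)" unfolding D_max_def mdef mr using mr0 by simp
    define h where "h = Inf Hs"
    have "Sup Ms \<le> ereal (h * \<epsilon> / (\<epsilon> - \<epsilon>'))"
    proof (rule Sup_least)
      fix y assume "y \<in> Ms"
      then obtain \<mu> \<rho>' where y: "y = ereal \<mu>" "\<rho>' \<in> carrier_mat n n" "nonneg_op \<rho>'" "Re (cmat_trace \<rho>') \<le> 1"
        "op_le (complex_of_real \<mu> \<cdot>\<^sub>m \<rho>') \<sigma>" "1 - (fidelity \<rho>' \<rho>)\<^sup>2 \<le> \<epsilon>'\<^sup>2" unfolding Ms_def by blast
      have "\<mu> * (\<epsilon> - \<epsilon>') / \<epsilon> \<le> h" unfolding h_def by (rule Hlow[OF y(2-6)])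
      hence "\<mu> \<le> h * \<epsilon> / (\<epsilon> - \<epsilon>')" using eps ee by (simp add: field_simps)
      thus "y \<le> ereal (h * \<epsilon> / (\<epsilon> - \<epsilon>'))" unfolding y(1) by simp
    qed
    hence "mr \<le> h * \<epsilon> / (\<epsilon> - \<epsilon>')" unfolding mr by simp
    hence hb: "mr * (\<epsilon> - \<epsilon>') / \<epsilon> \<le> h" using eps ee by (simp add: field_simps)
    have pos: "mr * (\<epsilon> - \<epsilon>') / \<epsilon> > 0" using mr0 eps ee by simp
    hence h0: "h > 0" using hb by linarith
    have DH: "D_H \<epsilon> \<rho> \<sigma> = ereal (- log 2 h)" unfolding D_H_def hdef h_def[symmetric] using h0 by simp
    have "log 2 (mr * (\<epsilon> - \<epsilon>') / \<epsilon>) \<le> log 2 h" using hb pos by simp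
    moreover have "log 2 (mr * (\<epsilon> - \<epsilon>') / \<epsilon>) = log 2 mr - log 2 (\<epsilon> / (\<epsilon> - \<epsilon>'))"
    proof -
      have "mr * (\<epsilon> - \<epsilon>') / \<epsilon> = mr / (\<epsilon> / (\<epsilon> - \<epsilon>'))" using eps ee by (simp add: field_simps)
      thus ?thesis using mr0 eps ee by (simp add: log_divide log_mult)
    qed
    ultimately have "- log 2 h \<le> - log 2 mr + log 2 (\<epsilon> / (\<epsilon> - \<epsilon>'))" by simp
    thus ?thesis unfolding DH Dm by simp
  qed
qed


end
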